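(* Suppose $\boldsymbol{\gamma}\in B(\boldsymbol{\gamma}^*,\epsilon_{n2})$ and $b_n=o\big((n/\log n)^{1/12}\big)$. Then, as $n\to\infty$, with probability at least $1-O(1/n)$ the solution $\widehat{\boldsymbol{\eta}}_\gamma$ of $F(\boldsymbol{\eta},\boldsymbol{\gamma})=0$ (in $\boldsymbol{\eta}$, with $\boldsymbol{\gamma}$ fixed) exists and satisfies \[ \|\widehat{\boldsymbol{\eta}}_\gamma-\boldsymbol{\eta}^*\|_\infty=O_p\Big(b_n^3\sqrt{\tfrac{\log n}{n}}\Big)=o_p(1). \] Moreover, if $\widehat{\boldsymbol{\eta}}_\gamma$ exists, it is unique.
   Context: Model (covariate-$p_0$-model): for $n\ge 2$ nodes labeled $1,\dots,n$, the entries $a_{ij}\in\{0,1\}$, $i\neq j$, of the adjacency matrix are independent Bernoulli random variables ($a_{ii}=0$) with $P(a_{ij}=1)=\mu(\pi_{ij})$, where $\mu(x)=e^x/(1+e^x)$ and $\pi_{ij}=\alpha_i+\beta_j+Z_{ij}^\top\boldsymbol{\gamma}$. The covariates $Z_{ij}\in\mathbb{R}^p$ are observed and treated as fixed, $p$ is fixed, and all entries of all $Z_{ij}$ lie in a fixed compact subset of $\mathbb{R}$; $z_{\max}=\max_{i\neq j}\|Z_{ij}\|_\infty$. For identification $\beta_n=0$, and $\boldsymbol{\eta}=(\alpha_1,\dots,\alpha_n,\beta_1,\dots,\beta_{n-1})^\top\in\mathbb{R}^{2n-1}$, $\boldsymbol{\gamma}\in\mathbb{R}^p$. True parameter values are $(\boldsymbol{\eta}^*,\boldsymbol{\gamma}^*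 )$. Out-degrees $d_i=\sum_{j\neq i}a_{ij}$, in-degrees $b_j=\sum_{i\neq j}a_{ij}$. Define $F(\boldsymbol{\eta},\boldsymbol{\gamma})\in\mathbb{R}^{2n-1}$ by $F_i=\sum_{k\neq i}\mu(\alpha_i+\beta_k+Z_{ik}^\top\boldsymbol{\gamma})-d_i$ for $i=1,\dots,n$, and $F_{n+j}=\sum_{k\neq j}\mu(\alpha_k+\beta_j+Z_{kj}^\top\boldsymbol{\gamma})-b_j$ for $j=1,\dots,n-1$. $B(\mathbf{x},\epsilon)=\{\mathbf{y}:\|\mathbf{x}-\mathbf{y}\|_\infty\le\epsilon\}$. Let $\epsilon_{n1}=o(1)$ and $0<\epsilon_{n2}\le(\log n/n)^{1/2}/(p z_{\max})$ be small positive numbers, and $b_n=\sup_{\boldsymbol{\eta}\in B(\boldsymbol{\eta}^*,\epsilon_{n1}),\,\boldsymbol{\gamma}\in B(\boldsymbol{\gamma}^*,\epsilon_{n2}),\,i\neq j}(1+e^{\pi_{ij}})^2/e^{\pi_{ij}}$ (so $b_n\ge 4$ and may grow with $n$). *)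

theory Defs
  imports "HOL-Analysis.Analysis" "HOL-Probability.Probability" "HOL-Library.Landau_Symbols"
begin

text \<open>The parameter vector eta in R^(2n-1) is a function nat => real, of which only the
  coordinates 1..2n-1 matter: alpha_i = eta i (i = 1..n), beta_j = eta (n+j) (j = 1..n-1),
  beta_n = 0.  Covariates Z i j :: real^'p, gamma :: real^'p.
  An adjacency matrix is a function (nat * nat) => bool; only off-diagonal pairs in
  {1..n} matter.\<close>

definition mu :: "real \<Rightarrow> real" where
  "mu x = exp x / (1 + exp x)"

definition alpha_of :: "(nat \<Rightarrow> real) \<Rightarrow> nat \<Rightarrow> real" where
  "alpha_of eta i = eta i"

definition beta_of :: "nat \<Rightarrow> (nat \<Rightarrow> real) \<Rightarrow> nat \<Rightarrow> real" where
  "beta_of n eta j = (if j = n then 0 else eta (n + j))"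

definition pi_ij :: "nat \<Rightarrow> (nat \<Rightarrow> nat \<Rightarrow> real^'p) \<Rightarrow> (nat \<Rightarrow> real) \<Rightarrow> real^'p \<Rightarrow> nat \<Rightarrow> nat \<Rightarrow> real" where
  "pi_ij n Z eta gam i j = alpha_of eta i + beta_of n eta j + Z i j \<bullet> gam"

definition offdiag :: "nat \<Rightarrow> (nat \<times> nat) set" where
  "offdiag n = {(i, j). i \<in> {1..n} \<and> j \<in> {1..n} \<and> i \<noteq> j}"

definition adj_pmf :: "nat \<Rightarrow> (nat \<Rightarrow> nat \<Rightarrow> real^'p) \<Rightarrow> (nat \<Rightarrow> real) \<Rightarrow> real^'p \<Rightarrow> (nat \<times> nat \<Rightarrow> bool) pmf" where
  "adj_pmf n Z etas gams =
     Pi_pmf (offdiag n) False (\<lambda>(i, j). bernoulli_pmf (mu (pi_ij n Z etas gams i j)))"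

definition outdeg :: "nat \<Rightarrow> (nat \<times> nat \<Rightarrow> bool) \<Rightarrow> nat \<Rightarrow> real" where
  "outdeg n A i = (\<Sum>j \<in> {1..n} - {i}. of_bool (A (i, j)))"

definition indeg :: "nat \<Rightarrow> (nat \<times> nat \<Rightarrow> bool) \<Rightarrow> nat \<Rightarrow> real" where
  "indeg n A j = (\<Sum>i \<in> {1..n} - {j}. of_bool (A (i, j)))"

definition F_fun :: "nat \<Rightarrow> (nat \<Rightarrow> nat \<Rightarrow> real^'p) \<Rightarrow> (nat \<times> nat \<Rightarrow> bool) \<Rightarrow> (nat \<Rightarrow> real) \<Rightarrow> real^'p \<Rightarrow> nat \<Rightarrow> real" where
  "F_fun n Z A eta gam k =
     (if k \<le> n then (\<Sum>j \<in> {1..n} - {k}. mu (pi_ij n Z eta gam k j)) - outdeg n A k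
      else (\<Sum>i \<in> {1..n} - {k - n}. mu (pi_ij n Z eta gam i (k - n))) - indeg n A (k - n))"

definition is_solution :: "nat \<Rightarrow> (nat \<Rightarrow> nat \<Rightarrow> real^'p) \<Rightarrow> (nat \<times> nat \<Rightarrow> bool) \<Rightarrow> real^'p \<Rightarrow> (nat \<Rightarrow> real) \<Rightarrow> bool" where
  "is_solution n Z A gam eta \<longleftrightarrow> (\<forall>k \<in> {1..2*n-1}. F_fun n Z A eta gam k = 0)"

definition eta_dist :: "nat \<Rightarrow> (nat \<Rightarrow> real) \<Rightarrow> (nat \<Rightarrow> real) \<Rightarrow> real" where
  "eta_dist n eta eta' = Max ((\<lambda>k. \<bar>eta k - eta' k\<bar>) ` {1..2*n-1})"

definition z_max :: "nat \<Rightarrow> (nat \<Rightarrow> nat \<Rightarrow> real^'p) \<Rightarrow> real" where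
  "z_max n Z = Max ((\<lambda>(i, j). infnorm (Z i j)) ` offdiag n)"

definition b_n :: "nat \<Rightarrow> (nat \<Rightarrow> nat \<Rightarrow> real^'p) \<Rightarrow> (nat \<Rightarrow> real) \<Rightarrow> real^'p \<Rightarrow> real \<Rightarrow> real \<Rightarrow> real" where
  "b_n n Z etas gams e1 e2 =
     Sup {(1 + exp (pi_ij n Z eta gam i j))^2 / exp (pi_ij n Z eta gam i j) | eta gam i j.
            (\<forall>k \<in> {1..2*n-1}. \<bar>eta k - etas k\<bar> \<le> e1) \<and> infnorm (gam - gams) \<le> e2
            \<and> (i, j) \<in> offdiag n}"

end

theory Submission
  imports Defs "HOL-Probability.Hoeffding" "HOL-Real_Asymp.Real_Asymp"
begin


definition mud :: "real \<Rightarrow> real" where "mud x = exp x / (1 + exp x)^2"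

lemma ep: "1 + exp x > (0::real)" using exp_gt_zero[of x] by linarith
lemma ep': "1 + exp x \<noteq> (0::real)" using ep[of x] by linarith

lemma mu_deriv: "DERIV mu x :> mud x"
  unfolding mu_def mud_def
  by (auto intro!: derivative_eq_intros simp: field_simps power2_eq_square ep')

lemma lg_deriv: "DERIV (\<lambda>x. ln (1 + exp x)) x :> mu x"
  unfolding mu_def
  by (auto intro!: derivative_eq_intros simp: field_simps ep' ep)

lemma mud_alt: "mud x = 1 / (exp (-x) + 2 + exp x)"
proof -
  have e: "exp x > 0" by simp
  have "exp (-x) + 2 + exp x = (1 + exp x)^2 / exp x" using e
    by (simp add: exp_minus field_simps power2_eq_square)
  then show ?thesis unfolding mud_def by simp
qed

lemma mud_pos: "mud x > 0"
  unfolding mud_def using ep[of x] by simp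

lemma mud_le: "mud x \<le> 1/4"
proof -
  have "4 * exp x \<le> (1 + exp x)^2"
    using sum_squares_ge_zero[of "1 - exp x" 0]
    by (simp add: power2_eq_square algebra_simps)
  then show ?thesis unfolding mud_def using ep[of x]
    by (simp add: pos_divide_le_eq)
qed

lemma mud_ratio: "mud (p + w) \<ge> exp (-\<bar>w\<bar>) * mud p"
proof -
  have a: "exp (-(p+w)) \<le> exp (-p) * exp \<bar>w\<bar>"
    unfolding mult_exp_exp by simp
  have b: "exp (p+w) \<le> exp p * exp \<bar>w\<bar>"
    unfolding mult_exp_exp by simp
  have c: "2 \<le> 2 * exp \<bar>w\<bar>" by simp
  have "exp (-(p+w)) + 2 + exp (p+w) \<le> exp (-p) * exp \<bar>w\<bar> + 2 * exp \<bar>w\<bar> + exp p * exp \<bar>w\<bar>"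
    using a b c by linarith
  then have "exp (-(p+w)) + 2 + exp (p+w) \<le> exp \<bar>w\<bar> * (exp (-p) + 2 + exp p)"
    by (simp add: algebra_simps)
  moreover have "exp (-(p+w)) + 2 + exp (p+w) > 0" by (simp add: add_pos_pos)
  ultimately have "1 / (exp \<bar>w\<bar> * (exp (-p) + 2 + exp p)) \<le> 1 / (exp (-(p+w)) + 2 + exp (p+w))"
    by (intro divide_left_mono) (auto simp: add_pos_pos)
  then show ?thesis unfolding mud_alt by (simp add: exp_minus field_simps)
qed

lemma mu_mono: "x \<le> y \<Longrightarrow> mu x \<le> mu y"
  using deriv_nonneg_imp_mono[of x y mu mud] mu_deriv mud_pos
  by (meson less_imp_le)

lemma mu_lip: "\<bar>mu x - mu y\<bar> \<le> \<bar>x - y\<bar> / 4"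
proof -
  have *: "mu b - mu a \<le> (b - a) / 4" if ab: "a < b" for a b
  proof -
    obtain z where "mu b - mu a = (b - a) * mud z"
      using MVT2[OF ab, of mu mud] mu_deriv by auto
    then show ?thesis using mud_le[of z] ab
      by (metis mult_left_mono less_eq_real_def diff_gt_0_iff_gt times_divide_eq_right mult_1_right)
  qed
  show ?thesis
    using *[of x y] *[of y x] mu_mono[of x y] mu_mono[of y x]
    by (cases "x < y"; cases "y < x") auto
qed

lemma mud_b: assumes "(1 + exp p)^2 / exp p \<le> b" shows "mud p \<ge> 1 / b"
proof -
  have "mud p = 1 / ((1 + exp p)^2 / exp p)" unfolding mud_def by simp
  moreover have c0: "(1 + exp p)^2 / exp p > 0" using ep[of p] by simp
  moreover have "1 / b \<le> 1 / ((1 + exp p)^2 / exp p)"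
  proof -
    have "b > 0" using c0 assms by linarith
    then have "0 < b * ((1 + exp p)^2 / exp p)" using c0 by (rule mult_pos_pos)
    then show ?thesis using divide_left_mono[OF assms, of 1] by simp
  qed
  ultimately show ?thesis by simp
qed

lemma K1:
  assumes "(1 + exp p)^2 / exp p \<le> b" "\<bar>x\<bar> \<le> 2" "\<bar>y\<bar> \<le> 2" "x \<le> y"
  shows "mu (p + y) - mu (p + x) \<ge> (y - x) / (exp 2 * b)"
proof (cases "x = y")
  case True then show ?thesis by simp
next
  case False
  then have xy: "p + x < p + y" using assms by simp
  obtain z where z: "p + x < z" "z < p + y" "mu (p + y) - mu (p + x) = (p + y - (p + x)) * mud z"
    using MVT2[OF xy, of mu mud] mu_deriv by blast
  have bpos: "b > 0"
    using assms(1) by (smt (verit) add_pos_pos divide_pos_pos exp_gt_zero zero_less_power)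
  have "\<bar>z - p\<bar> \<le> 2" using z assms by auto
  then have "exp (- \<bar>z - p\<bar>) \<ge> exp (-2)" by simp
  have m: "mud z \<ge> exp (- \<bar>z - p\<bar>) * mud p"
    using mud_ratio[where p=p and w="z - p"] by simp
  have "mud z \<ge> exp (-2) * (1 / b)"
    using m \<open>exp (-2) \<le> exp (- \<bar>z - p\<bar>)\<close> mud_b[OF assms(1)]
    by (smt (verit) exp_gt_zero mult_mono mud_pos bpos divide_pos_pos)
  then have "mud z \<ge> 1 / (exp 2 * b)" by (simp add: exp_minus field_simps)
  then show ?thesis using z assms by (simp add: mult_left_mono divide_simps)
qed

lemma curv_bpos: "(1 + exp (p::real))^2 / exp p \<le> b \<Longrightarrow> b > 0"
  using ep[of p] by (smt (verit) divide_pos_pos exp_gt_zero zero_less_power)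

lemma K4:
  assumes c: "(1 + exp p)^2 / exp p \<le> b" and u: "\<bar>u\<bar> \<le> 2"
  shows "ln (1 + exp (p + u)) - ln (1 + exp p) - mu p * u \<ge> u^2 / (2 * exp 2 * b)"
proof -
  have bpos: "b > 0" using curv_bpos[OF c] .
  define k where "k = 1 / (exp 2 * b)"
  define \<phi> where "\<phi> t = ln (1 + exp (p + t)) - ln (1 + exp p) - mu p * t - k * t^2 / 2" for t
  define \<phi>' where "\<phi>' t = mu (p + t) - mu p - k * t" for t
  have d: "(\<phi> has_real_derivative \<phi>' t) (at t)" for t
    unfolding \<phi>_def \<phi>'_def
    by (rule derivative_eq_intros refl DERIV_chain2[OF lg_deriv] | simp)+
  have \<phi>0: "\<phi> 0 = 0" unfolding \<phi>_def by simp
  have "\<phi> u \<ge> 0"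
  proof (cases "u \<ge> 0")
    case True
    have "\<phi> 0 \<le> \<phi> u"
    proof (rule deriv_nonneg_imp_mono[of 0 u \<phi> \<phi>'])
      fix t assume t: "t \<in> {0..u}"
      show "(\<phi> has_real_derivative \<phi>' t) (at t)" by (rule d)
      have "mu (p + t) - mu (p + 0) \<ge> (t - 0) / (exp 2 * b)"
        by (rule K1[OF c]) (use t u in auto)
      then show "\<phi>' t \<ge> 0" unfolding \<phi>'_def k_def by simp
    qed (use True in auto)
    then show ?thesis using \<phi>0 by simp
  next
    case False
    have "(- \<phi>) u \<le> (- \<phi>) 0"
    proof (rule deriv_nonneg_imp_mono[of u 0 "-\<phi>" "\<lambda>t. - \<phi>' t"])
      fix t assume t: "t \<in> {u..0}"
      show "((- \<phi>) has_real_derivative - \<phi>' t) (at t)"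
        using DERIV_minus[OF d[of t]] by (simp add: fun_Compl_def)
      have "mu (p + 0) - mu (p + t) \<ge> (0 - t) / (exp 2 * b)"
        by (rule K1[OF c]) (use t u in auto)
      then show "- \<phi>' t \<ge> 0" unfolding \<phi>'_def k_def by simp
    qed (use False in auto)
    then show ?thesis using \<phi>0 by simp
  qed
  then show ?thesis unfolding \<phi>_def k_def by simp
qed

lemma TLp:
  assumes c: "(1 + exp p)^2 / exp p \<le> b" and m: "0 \<le> m" "m \<le> 1" "m \<le> x"
  shows "mu (p + x + y) - mu p \<ge> m / (exp 2 * b) * (1 - \<bar>y\<bar>) - \<bar>y\<bar> / 4"
proof -
  have bpos: "b > 0" using curv_bpos[OF c] .
  have A: "mu (p + x + y) - mu (p + y) \<ge> m / (exp 2 * b) * (1 - \<bar>y\<bar>)"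
  proof (cases "\<bar>y\<bar> \<le> 1")
    case True
    have "mu (p + (y + m)) - mu (p + y) \<ge> (y + m - y) / (exp 2 * b)"
      by (rule K1[OF c]) (use True m in auto)
    moreover have "mu (p + (y + m)) \<le> mu (p + x + y)" by (rule mu_mono) (use m in auto)
    moreover have "m / (exp 2 * b) * (1 - \<bar>y\<bar>) \<le> m / (exp 2 * b)"
      by (intro mult_left_le) (use True m bpos in auto)
    ultimately show ?thesis by simp
  next
    case False
    have "mu (p + y) \<le> mu (p + x + y)" by (rule mu_mono) (use m in auto)
    moreover have "m / (exp 2 * b) * (1 - \<bar>y\<bar>) \<le> 0"
      using False m bpos by (intro mult_nonneg_nonpos) auto
    ultimately show ?thesis by simp
  qed
  have B: "mu (p + y) - mu p \<ge> - \<bar>y\<bar> / 4" using mu_lip[of "p + y" p] by (simp only: add_diff_cancel_left' abs_le_iff) linarith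
  show ?thesis using A B by simp
qed

lemma TLm:
  assumes c: "(1 + exp p)^2 / exp p \<le> b" and m: "0 \<le> m" "m \<le> 1" "x \<le> - m"
  shows "mu (p + x + y) - mu p \<le> - (m / (exp 2 * b) * (1 - \<bar>y\<bar>)) + \<bar>y\<bar> / 4"
proof -
  have bpos: "b > 0" using curv_bpos[OF c] .
  have A: "mu (p + y) - mu (p + x + y) \<ge> m / (exp 2 * b) * (1 - \<bar>y\<bar>)"
  proof (cases "\<bar>y\<bar> \<le> 1")
    case True
    have "mu (p + y) - mu (p + (y - m)) \<ge> (y - (y - m)) / (exp 2 * b)"
      by (rule K1[OF c]) (use True m in auto)
    moreover have "mu (p + x + y) \<le> mu (p + (y - m))" by (rule mu_mono) (use m in auto)
    moreover have "m / (exp 2 * b) * (1 - \<bar>y\<bar>) \<le> m / (exp 2 * b)"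
      by (intro mult_left_le) (use True m bpos in auto)
    ultimately show ?thesis by simp
  next
    case False
    have "mu (p + x + y) \<le> mu (p + y)" by (rule mu_mono) (use m in auto)
    moreover have "m / (exp 2 * b) * (1 - \<bar>y\<bar>) \<le> 0"
      using False m bpos by (intro mult_nonneg_nonpos) auto
    ultimately show ?thesis by simp
  qed
  have B: "mu (p + y) - mu p \<le> \<bar>y\<bar> / 4" using mu_lip[of "p + y" p] by (simp only: add_diff_cancel_left' abs_le_iff)
  show ?thesis using A B by simp
qed



lemma curv_ge4: "(1 + exp (p::real))^2 / exp p \<ge> 4"
proof -
  have "4 * exp p \<le> (1 + exp p)^2"
    using sum_squares_ge_zero[of "1 - exp p" 0]
    by (simp add: power2_eq_square algebra_simps)
  then show ?thesis by (simp add: pos_le_divide_eq)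
qed

lemma sq_sum_le: "((a::real) + b)^2 \<le> 2 * a^2 + 2 * b^2"
  using zero_le_square[of "a - b"] by (simp add: power2_eq_square algebra_simps)

lemma off_sum:
  assumes "finite I" "i \<in> I"
  shows "(\<Sum>j\<in>I-{i}. f j) = (\<Sum>j\<in>I. if j = i then 0 else f j)"
  by (rule sym, rule sum.mono_neutral_cong_right) (use assms in auto)

lemma sum_swap_off:
  "(\<Sum>i\<in>I. \<Sum>j\<in>I-{i}. f i j) = (\<Sum>j\<in>I. \<Sum>i\<in>I-{j}. f i j)" if "finite I"
proof -
  have "(\<Sum>i\<in>I. \<Sum>j\<in>I-{i}. f i j) = (\<Sum>i\<in>I. \<Sum>j\<in>I. if j = i then 0 else f i j)"
    by (rule sum.cong[OF refl]) (simp add: off_sum[OF that])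
  also have "\<dots> = (\<Sum>i\<in>I. \<Sum>j\<in>I. if i = j then 0 else f i j)"
    by (intro sum.cong refl) auto
  also have "\<dots> = (\<Sum>j\<in>I. \<Sum>i\<in>I. if i = j then 0 else f i j)" by (rule sum.swap)
  also have "\<dots> = (\<Sum>j\<in>I. \<Sum>i\<in>I-{j}. f i j)"
    by (rule sum.cong[OF refl]) (simp add: off_sum[OF that])
  finally show ?thesis .
qed

lemma gen_lower:
  assumes fin: "finite J" and c: "\<And>j. j \<in> J \<Longrightarrow> (1 + exp (q j))^2 / exp (q j) \<le> b" and b4: "b \<ge> 4"
    and m: "0 \<le> m" "m \<le> 1" "m \<le> X" and Z: "(\<Sum>j\<in>J. \<bar>z j\<bar>) \<le> Z0"
  shows "(\<Sum>j\<in>J. mu (q j + X + z j) - mu (q j)) \<ge> m / (exp 2 * b) * card J - 5/4 * Z0"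
proof -
  define k where "k = m / (exp 2 * b)"
  have k: "0 \<le> k" "k \<le> 1"
  proof -
    show "0 \<le> k" using m b4 unfolding k_def by simp
    have "exp 2 * b \<ge> 1 * 1" using b4 by (intro mult_mono) auto
    then show "k \<le> 1" using m unfolding k_def by (simp add: divide_le_eq)
  qed
  have "(\<Sum>j\<in>J. mu (q j + X + z j) - mu (q j)) \<ge> (\<Sum>j\<in>J. k - (k + 1/4) * \<bar>z j\<bar>)"
  proof (intro sum_mono)
    fix j assume "j \<in> J"
    from TLp[OF c[OF this] m, of "z j"] have "k * (1 - \<bar>z j\<bar>) - \<bar>z j\<bar> / 4 \<le> mu (q j + X + z j) - mu (q j)"
      by (simp only: k_def)
    then show "k - (k + 1/4) * \<bar>z j\<bar> \<le> mu (q j + X + z j) - mu (q j)"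
      by (simp add: algebra_simps)
  qed
  also have "(\<Sum>j\<in>J. k - (k + 1/4) * \<bar>z j\<bar>) = k * card J - (k + 1/4) * (\<Sum>j\<in>J. \<bar>z j\<bar>)"
    by (simp add: sum_subtractf sum_distrib_left)
  also have "\<dots> \<ge> k * card J - 5/4 * Z0"
  proof -
    have "(k + 1/4) * (\<Sum>j\<in>J. \<bar>z j\<bar>) \<le> 5/4 * Z0"
      using k Z by (intro mult_mono) (auto intro: sum_nonneg)
    then show ?thesis by simp
  qed
  finally show ?thesis unfolding k_def .
qed

lemma gen_upper:
  assumes fin: "finite J" and c: "\<And>j. j \<in> J \<Longrightarrow> (1 + exp (q j))^2 / exp (q j) \<le> b" and b4: "b \<ge> 4"
    and m: "0 \<le> m" "m \<le> 1" "X \<le> - m" and Z: "(\<Sum>j\<in>J. \<bar>z j\<bar>) \<le> Z0"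
  shows "(\<Sum>j\<in>J. mu (q j + X + z j) - mu (q j)) \<le> - (m / (exp 2 * b) * card J) + 5/4 * Z0"
proof -
  define k where "k = m / (exp 2 * b)"
  have k: "0 \<le> k" "k \<le> 1"
  proof -
    show "0 \<le> k" using m b4 unfolding k_def by simp
    have "exp 2 * b \<ge> 1 * 1" using b4 by (intro mult_mono) auto
    then show "k \<le> 1" using m unfolding k_def by (simp add: divide_le_eq)
  qed
  have "(\<Sum>j\<in>J. mu (q j + X + z j) - mu (q j)) \<le> (\<Sum>j\<in>J. - k + (k + 1/4) * \<bar>z j\<bar>)"
  proof (intro sum_mono)
    fix j assume "j \<in> J"
    from TLm[OF c[OF this] m, of "z j"] have "mu (q j + X + z j) - mu (q j) \<le> - (k * (1 - \<bar>z j\<bar>)) + \<bar>z j\<bar> / 4"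
      by (simp only: k_def)
    then show "mu (q j + X + z j) - mu (q j) \<le> - k + (k + 1/4) * \<bar>z j\<bar>"
      by (simp add: algebra_simps)
  qed
  also have "(\<Sum>j\<in>J. - k + (k + 1/4) * \<bar>z j\<bar>) = - (k * card J) + (k + 1/4) * (\<Sum>j\<in>J. \<bar>z j\<bar>)"
    by (simp only: sum.distrib sum_distrib_left[symmetric]) simp
  also have "\<dots> \<le> - (k * card J) + 5/4 * Z0"
  proof -
    have "(k + 1/4) * (\<Sum>j\<in>J. \<bar>z j\<bar>) \<le> 5/4 * Z0"
      using k Z by (intro mult_mono) (auto intro: sum_nonneg)
    then show ?thesis by simp
  qed
  finally show ?thesis unfolding k_def .
qed

locale det =
  fixes n :: nat and p0 :: "nat \<Rightarrow> nat \<Rightarrow> real" and Y :: "nat \<Rightarrow> nat \<Rightarrow> real" and b \<delta> :: real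
  assumes n4: "4 \<le> n"
    and curv: "\<And>i j. i \<in> {1..n} \<Longrightarrow> j \<in> {1..n} \<Longrightarrow> i \<noteq> j \<Longrightarrow> (1 + exp (p0 i j))^2 / exp (p0 i j) \<le> b"
    and rowd: "\<And>i. i \<in> {1..n} \<Longrightarrow> \<bar>\<Sum>j\<in>{1..n}-{i}. mu (p0 i j) - Y i j\<bar> \<le> \<delta>"
    and cold: "\<And>j. j \<in> {1..n} \<Longrightarrow> \<bar>\<Sum>i\<in>{1..n}-{j}. mu (p0 i j) - Y i j\<bar> \<le> \<delta>"
    and dpos: "\<delta> > 0"
    and small: "2 * (10 * exp 2 * b * \<delta> + \<delta>) * (exp 2 * b) / (real n - 1) < 1"
begin

abbreviation "I \<equiv> {1..n}"
definition hh :: "(nat \<Rightarrow> real) \<Rightarrow> nat \<Rightarrow> nat \<Rightarrow> real" where "hh v i j = v i + v (n + j)"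
definition Lf :: "(nat \<Rightarrow> real) \<Rightarrow> real" where
  "Lf v = (\<Sum>i\<in>I. \<Sum>j\<in>I-{i}. ln (1 + exp (p0 i j + hh v i j)) - Y i j * hh v i j)"
definition Fr :: "(nat \<Rightarrow> real) \<Rightarrow> nat \<Rightarrow> real" where
  "Fr v i = (\<Sum>j\<in>I-{i}. mu (p0 i j + hh v i j) - Y i j)"
definition Fc :: "(nat \<Rightarrow> real) \<Rightarrow> nat \<Rightarrow> real" where
  "Fc v j = (\<Sum>i\<in>I-{j}. mu (p0 i j + hh v i j) - Y i j)"
definition Fk :: "(nat \<Rightarrow> real) \<Rightarrow> nat \<Rightarrow> real" where
  "Fk v k = (\<Sum>i\<in>I. \<Sum>j\<in>I-{i}. (mu (p0 i j + hh v i j) - Y i j) * (of_bool (i = k) + of_bool (n + j = k)))"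
definition Box :: "(nat \<Rightarrow> real) set" where
  "Box = {v. \<forall>k. (k \<in> {1..2*n} \<longrightarrow> v k \<in> {-1..1}) \<and> (k \<notin> {1..2*n} \<longrightarrow> v k = 0)}"
definition t0 :: real where "t0 = 2 * (10 * exp 2 * b * \<delta> + \<delta>) * (exp 2 * b) / (real n - 1)"

lemma b4: "b \<ge> 4"
  using curv[of 1 2] curv_ge4[of "p0 1 2"] n4 by force

lemma Box_PiE: "Box = PiE UNIV (\<lambda>k. if k \<in> {1..2*n} then {-1..1} else {0})"
  unfolding Box_def PiE_def Pi_def by auto

lemma compact_Box: "compact Box"
proof -
  have "compactin (product_topology (\<lambda>_. euclidean) UNIV)
          (PiE UNIV (\<lambda>k. if k \<in> {1..2*n} then {-1..1::real} else {0}))"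
    by (subst compactin_PiE) auto
  then show ?thesis unfolding Box_PiE euclidean_product_topology by simp
qed

lemma zero_Box: "(\<lambda>_. 0) \<in> Box" unfolding Box_def by auto

lemma coord_cont: "continuous_on S (\<lambda>x::nat\<Rightarrow>real. x i)"
  by (rule continuous_on_subset[OF continuous_on_product_coordinates]) auto

lemma cont_Lf: "continuous_on S Lf"
  unfolding Lf_def hh_def
  by (intro continuous_intros coord_cont) (auto simp: ep ep')

lemma minimizer: "\<exists>v\<in>Box. \<forall>u\<in>Box. Lf v \<le> Lf u"
  using continuous_attains_inf[OF compact_Box _ cont_Lf] zero_Box by blast

lemma hh_deriv: "DERIV (\<lambda>t. hh (v(k:=t)) i j) t :> (of_bool (i = k) + of_bool (n + j = k))"
  unfolding hh_def
  by (cases "i = k"; cases "n + j = k") (auto intro!: derivative_eq_intros)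

lemma Lf_deriv: "DERIV (\<lambda>t. Lf (v(k:=t))) t :> Fk (v(k:=t)) k"
  unfolding Lf_def Fk_def
proof (intro DERIV_sum)
  fix i j
  show "((\<lambda>t. ln (1 + exp (p0 i j + hh (v(k := t)) i j)) - Y i j * hh (v(k := t)) i j) has_real_derivative
         (mu (p0 i j + hh (v(k := t)) i j) - Y i j) * (of_bool (i = k) + of_bool (n + j = k))) (at t)"
    by (rule derivative_eq_intros DERIV_chain2[OF lg_deriv] hh_deriv refl | simp add: algebra_simps)+
qed

lemma KKT:
  assumes v: "v \<in> Box" and minv: "\<forall>u\<in>Box. Lf v \<le> Lf u" and k: "k \<in> {1..2*n}"
  shows "v k < 1 \<Longrightarrow> Fk v k \<ge> 0" and "v k > -1 \<Longrightarrow> Fk v k \<le> 0"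
proof -
  have vv: "v(k := v k) = v" by simp
  have d: "DERIV (\<lambda>t. Lf (v(k:=t))) (v k) :> Fk v k"
    using Lf_deriv[of v k "v k"] by simp
  have inbox: "v(k := t) \<in> Box" if "-1 \<le> t" "t \<le> 1" for t
    using v k that unfolding Box_def by auto
  show "Fk v k \<ge> 0" if lt: "v k < 1"
  proof (rule ccontr)
    assume "\<not> Fk v k \<ge> 0"
    then obtain e where e: "e > 0" "\<forall>h>0. h < e \<longrightarrow> Lf (v(k:=v k)) > Lf (v(k:= v k + h))"
      using DERIV_neg_dec_right[OF d] by force
    define h where "h = min (e/2) (1 - v k)"
    have h: "h > 0" "h < e" using e lt by (auto simp: h_def)
    have "v k \<ge> -1" using v k unfolding Box_def by auto
    then have "v(k := v k + h) \<in> Box" using h lt by (intro inbox) (auto simp: h_def)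
    then show False using minv e(2) h vv by fastforce
  qed
  show "Fk v k \<le> 0" if gt: "v k > -1"
  proof (rule ccontr)
    assume "\<not> Fk v k \<le> 0"
    then obtain e where e: "e > 0" "\<forall>h>0. h < e \<longrightarrow> Lf (v(k:= v k - h)) < Lf (v(k:=v k))"
      using DERIV_pos_inc_left[OF d] by force
    define h where "h = min (e/2) (v k + 1)"
    have h: "h > 0" "h < e" using e gt by (auto simp: h_def)
    have "v k \<le> 1" using v k unfolding Box_def by auto
    then have "v(k := v k - h) \<in> Box" using h gt by (intro inbox) (auto simp: h_def)
    then show False using minv e(2) h vv by fastforce
  qed
qed

lemma Fk_row: assumes "i \<in> I" shows "Fk v i = Fr v i"
proof -
  have "Fk v i = (\<Sum>i'\<in>I. if i' = i then (\<Sum>j\<in>I-{i'}. mu (p0 i' j + hh v i' j) - Y i' j) else 0)"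
    unfolding Fk_def using assms by (intro sum.cong refl) auto
  also have "\<dots> = Fr v i" using assms by (simp add: Fr_def)
  finally show ?thesis .
qed

lemma Fk_col: assumes "j \<in> I" shows "Fk v (n + j) = Fc v j"
proof -
  have "Fk v (n + j) = (\<Sum>i'\<in>I. if i' = j then 0 else mu (p0 i' j + hh v i' j) - Y i' j)"
    unfolding Fk_def using assms
    by (intro sum.cong refl) (auto simp: sum.delta' if_distrib cong: if_cong)
  also have "\<dots> = (\<Sum>i'\<in>I-{j}. mu (p0 i' j + hh v i' j) - Y i' j)"
    using assms by (simp add: off_sum)
  finally show ?thesis unfolding Fc_def .
qed

lemma box_bound: "v \<in> Box \<Longrightarrow> k \<in> {1..2*n} \<Longrightarrow> \<bar>v k\<bar> \<le> 1"
  unfolding Box_def by auto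

lemma cardI: "card I = n" by simp

lemma T_bound:
  assumes v: "v \<in> Box" and minv: "\<forall>u\<in>Box. Lf v \<le> Lf u"
  shows "(\<Sum>i\<in>I. \<bar>v i - (\<Sum>i\<in>I. v i) / n\<bar>) + (\<Sum>j\<in>I. \<bar>v (n+j) + (\<Sum>i\<in>I. v i) / n\<bar>) \<le> 8 * exp 2 * b * \<delta>"
proof -
  define s where "s = (\<Sum>i\<in>I. v i) / n"
  define x where "x i = v i - s" for i
  define y where "y j = v (n+j) + s" for j
  define e where "e i j = mu (p0 i j) - Y i j" for i j
  define T where "T = (\<Sum>i\<in>I. \<bar>x i\<bar>) + (\<Sum>j\<in>I. \<bar>y j\<bar>)"
  define S where "S = (\<Sum>i\<in>I. (x i)^2) + (\<Sum>j\<in>I. (y j)^2)"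
  have npos: "real n > 0" using n4 by simp
  have hv: "hh v i j = x i + y j" for i j unfolding hh_def x_def y_def by simp
  have hb: "\<bar>hh v i j\<bar> \<le> 2" if "i \<in> I" "j \<in> I" for i j
    using box_bound[OF v, of i] box_bound[OF v, of "n+j"] that unfolding hh_def by auto
  have bpos: "b > 0" using b4 by simp
  have L0: "Lf (\<lambda>_. 0) = (\<Sum>i\<in>I. \<Sum>j\<in>I-{i}. ln (1 + exp (p0 i j)))"
    unfolding Lf_def hh_def by simp
  have "Lf v \<le> Lf (\<lambda>_. 0)" using minv zero_Box by blast
  then have "(\<Sum>i\<in>I. \<Sum>j\<in>I-{i}. ln (1 + exp (p0 i j + hh v i j)) - Y i j * hh v i j - ln (1 + exp (p0 i j))) \<le> 0"
    unfolding L0 unfolding Lf_def by (simp add: sum_subtractf)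
  moreover have "(\<Sum>i\<in>I. \<Sum>j\<in>I-{i}. e i j * hh v i j + (hh v i j)^2 / (2 * exp 2 * b))
      \<le> (\<Sum>i\<in>I. \<Sum>j\<in>I-{i}. ln (1 + exp (p0 i j + hh v i j)) - Y i j * hh v i j - ln (1 + exp (p0 i j)))"
  proof (intro sum_mono)
    fix i j assume i: "i \<in> I" and j: "j \<in> I - {i}"
    have "ln (1 + exp (p0 i j + hh v i j)) - ln (1 + exp (p0 i j)) - mu (p0 i j) * hh v i j \<ge> (hh v i j)^2 / (2 * exp 2 * b)"
      by (rule K4[OF curv hb]) (use i j in auto)
    then show "e i j * hh v i j + (hh v i j)^2 / (2 * exp 2 * b)
      \<le> ln (1 + exp (p0 i j + hh v i j)) - Y i j * hh v i j - ln (1 + exp (p0 i j))"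
      unfolding e_def by (simp add: algebra_simps)
  qed
  ultimately have main: "(\<Sum>i\<in>I. \<Sum>j\<in>I-{i}. e i j * (x i + y j)) + (\<Sum>i\<in>I. \<Sum>j\<in>I-{i}. (x i + y j)^2) / (2 * exp 2 * b) \<le> 0"
    unfolding hv by (simp add: sum.distrib sum_divide_distrib)
  have lin: "(\<Sum>i\<in>I. \<Sum>j\<in>I-{i}. e i j * (x i + y j))
      = (\<Sum>i\<in>I. x i * (\<Sum>j\<in>I-{i}. e i j)) + (\<Sum>j\<in>I. y j * (\<Sum>i\<in>I-{j}. e i j))"
  proof -
    have "(\<Sum>i\<in>I. \<Sum>j\<in>I-{i}. e i j * (x i + y j))
        = (\<Sum>i\<in>I. \<Sum>j\<in>I-{i}. x i * e i j) + (\<Sum>i\<in>I. \<Sum>j\<in>I-{i}. y j * e i j)"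
      by (simp add: algebra_simps sum.distrib)
    also have "(\<Sum>i\<in>I. \<Sum>j\<in>I-{i}. y j * e i j) = (\<Sum>j\<in>I. \<Sum>i\<in>I-{j}. y j * e i j)"
      by (rule sum_swap_off) simp
    finally show ?thesis by (simp add: sum_distrib_left)
  qed
  have linb: "(\<Sum>i\<in>I. \<Sum>j\<in>I-{i}. e i j * (x i + y j)) \<ge> - \<delta> * T"
  proof -
    have a: "x i * (\<Sum>j\<in>I-{i}. e i j) \<ge> - \<delta> * \<bar>x i\<bar>" if "i \<in> I" for i
    proof -
      have "\<bar>x i * (\<Sum>j\<in>I-{i}. e i j)\<bar> \<le> \<bar>x i\<bar> * \<delta>"
        using rowd[OF that] unfolding e_def abs_mult by (intro mult_left_mono) auto
      then show ?thesis by (simp add: abs_le_iff algebra_simps)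
    qed
    have b: "y j * (\<Sum>i\<in>I-{j}. e i j) \<ge> - \<delta> * \<bar>y j\<bar>" if "j \<in> I" for j
    proof -
      have "\<bar>y j * (\<Sum>i\<in>I-{j}. e i j)\<bar> \<le> \<bar>y j\<bar> * \<delta>"
        using cold[OF that] unfolding e_def abs_mult by (intro mult_left_mono) auto
      then show ?thesis by (simp add: abs_le_iff algebra_simps)
    qed
    have "(\<Sum>i\<in>I. x i * (\<Sum>j\<in>I-{i}. e i j)) \<ge> (\<Sum>i\<in>I. - \<delta> * \<bar>x i\<bar>)"
      using a by (intro sum_mono) auto
    moreover have "(\<Sum>j\<in>I. y j * (\<Sum>i\<in>I-{j}. e i j)) \<ge> (\<Sum>j\<in>I. - \<delta> * \<bar>y j\<bar>)"
      using b by (intro sum_mono) auto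
    moreover have "(\<Sum>i\<in>I. - \<delta> * \<bar>x i\<bar>) = - \<delta> * (\<Sum>i\<in>I. \<bar>x i\<bar>)" by (simp add: sum_distrib_left)
    moreover have "(\<Sum>j\<in>I. - \<delta> * \<bar>y j\<bar>) = - \<delta> * (\<Sum>j\<in>I. \<bar>y j\<bar>)" by (simp add: sum_distrib_left)
    ultimately show ?thesis unfolding lin T_def by (simp add: algebra_simps)
  qed
  have sx: "(\<Sum>i\<in>I. x i) = 0"
    unfolding x_def s_def using npos by (simp add: sum_subtractf)
  have quad: "(\<Sum>i\<in>I. \<Sum>j\<in>I-{i}. (x i + y j)^2) \<ge> (real n - 2) * S"
  proof -
    have r: "(\<Sum>j\<in>I-{i}. (x i + y j)^2) = (\<Sum>j\<in>I. (x i + y j)^2) - (x i + y i)^2" if "i \<in> I" for i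
      using that by (simp add: sum_diff1)
    have full: "(\<Sum>i\<in>I. \<Sum>j\<in>I. (x i + y j)^2) = real n * S"
    proof -
      have "(\<Sum>i\<in>I. \<Sum>j\<in>I. (x i + y j)^2)
          = (\<Sum>i\<in>I. \<Sum>j\<in>I. (x i)^2 + 2 * x i * y j + (y j)^2)"
        by (simp add: power2_sum algebra_simps)
      also have "\<dots> = (\<Sum>i\<in>I. real n * (x i)^2 + 2 * x i * (\<Sum>j\<in>I. y j) + (\<Sum>j\<in>I. (y j)^2))"
        by (simp add: sum.distrib sum_distrib_left)
      also have "\<dots> = real n * (\<Sum>i\<in>I. (x i)^2) + 2 * (\<Sum>i\<in>I. x i) * (\<Sum>j\<in>I. y j) + real n * (\<Sum>j\<in>I. (y j)^2)"
        by (simp add: sum.distrib sum_distrib_left sum_distrib_right algebra_simps)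
      finally show ?thesis using sx unfolding S_def by (simp add: algebra_simps)
    qed
    have diag: "(\<Sum>i\<in>I. (x i + y i)^2) \<le> 2 * S"
    proof -
      have "(\<Sum>i\<in>I. (x i + y i)^2) \<le> (\<Sum>i\<in>I. 2 * (x i)^2 + 2 * (y i)^2)"
        by (intro sum_mono sq_sum_le)
      also have "\<dots> = 2 * S" unfolding S_def by (simp add: sum.distrib sum_distrib_left)
      finally show ?thesis .
    qed
    have "(\<Sum>i\<in>I. \<Sum>j\<in>I-{i}. (x i + y j)^2) = (\<Sum>i\<in>I. \<Sum>j\<in>I. (x i + y j)^2) - (\<Sum>i\<in>I. (x i + y i)^2)"
    proof -
      have "(\<Sum>i\<in>I. \<Sum>j\<in>I-{i}. (x i + y j)^2) = (\<Sum>i\<in>I. (\<Sum>j\<in>I. (x i + y j)^2) - (x i + y i)^2)"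
        by (rule sum.cong[OF refl]) (rule r)
      then show ?thesis by (simp add: sum_subtractf)
    qed
    then show ?thesis using full diag by (simp add: algebra_simps)
  qed
  have Spos: "S \<ge> 0" unfolding S_def by (intro add_nonneg_nonneg sum_nonneg) auto
  have Tpos: "T \<ge> 0" unfolding T_def by (intro add_nonneg_nonneg sum_nonneg) auto
  have CS: "T^2 \<le> 2 * real n * S"
  proof -
    have 1: "(\<Sum>i\<in>I. \<bar>x i\<bar>)^2 \<le> (\<Sum>i\<in>I. (x i)^2) * real n"
      using sum_squared_le_sum_of_squares[of "\<lambda>i. \<bar>x i\<bar>" I] by simp
    have 2: "(\<Sum>j\<in>I. \<bar>y j\<bar>)^2 \<le> (\<Sum>j\<in>I. (y j)^2) * real n"
      using sum_squared_le_sum_of_squares[of "\<lambda>j. \<bar>y j\<bar>" I] by simp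
    have "T^2 \<le> 2 * (\<Sum>i\<in>I. \<bar>x i\<bar>)^2 + 2 * (\<Sum>j\<in>I. \<bar>y j\<bar>)^2"
      unfolding T_def by (rule sq_sum_le)
    then show ?thesis using 1 2 unfolding S_def by (simp add: algebra_simps)
  qed
  define k where "k = 1 / (2 * exp 2 * b)"
  have kpos: "k > 0" using bpos unfolding k_def by simp
  have key: "k * (real n - 2) * S \<le> \<delta> * T"
  proof -
    have "(\<Sum>i\<in>I. \<Sum>j\<in>I-{i}. (x i + y j)^2) / (2 * exp 2 * b) = k * (\<Sum>i\<in>I. \<Sum>j\<in>I-{i}. (x i + y j)^2)"
      unfolding k_def by simp
    moreover have "k * ((real n - 2) * S) \<le> k * (\<Sum>i\<in>I. \<Sum>j\<in>I-{i}. (x i + y j)^2)"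
      using quad kpos by (intro mult_left_mono) auto
    ultimately show ?thesis using main linb by (simp add: algebra_simps)
  qed
  have "k * T \<le> 4 * \<delta>"
  proof (cases "T = 0")
    case True then show ?thesis using dpos by simp
  next
    case False
    then have Tp: "T > 0" using Tpos by simp
    have "k * (real n - 2) * T^2 \<le> k * (real n - 2) * (2 * real n * S)"
      using CS kpos n4 by (intro mult_left_mono) auto
    also have "\<dots> = 2 * real n * (k * (real n - 2) * S)" by (simp add: algebra_simps)
    also have "\<dots> \<le> 2 * real n * (\<delta> * T)" using key npos by (intro mult_left_mono) auto
    finally have "(k * (real n - 2) * T) * T \<le> (2 * real n * \<delta>) * T" by (simp add: power2_eq_square algebra_simps)
    then have "k * (real n - 2) * T \<le> 2 * real n * \<delta>" using Tp by simp
    also have "\<dots> \<le> 4 * (real n - 2) * \<delta>" using n4 dpos by (intro mult_right_mono) auto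
    finally have "(real n - 2) * (k * T) \<le> (real n - 2) * (4 * \<delta>)" by (simp add: algebra_simps)
    then show ?thesis using n4 by simp
  qed
  then have "T \<le> 4 * \<delta> / k" using kpos by (simp add: field_simps)
  then show ?thesis unfolding T_def x_def y_def s_def k_def by (simp add: algebra_simps)
qed

lemma card_off: "i \<in> I \<Longrightarrow> real (card (I - {i})) = real n - 1"
  using n4 by (simp add: of_nat_diff)

lemma det_main:
  "\<exists>a c. c n = 0 \<and> (\<forall>i\<in>I. \<bar>a i\<bar> \<le> 2 * t0) \<and> (\<forall>j\<in>I. \<bar>c j\<bar> \<le> 2 * t0)
     \<and> (\<forall>i\<in>I. (\<Sum>j\<in>I-{i}. mu (p0 i j + a i + c j) - Y i j) = 0)
     \<and> (\<forall>j\<in>I. (\<Sum>i\<in>I-{j}. mu (p0 i j + a i + c j) - Y i j) = 0)"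
proof -
  obtain v where v: "v \<in> Box" and minv: "\<forall>u\<in>Box. Lf v \<le> Lf u" using minimizer by blast
  define s where "s = (\<Sum>i\<in>I. v i) / n"
  define x where "x i = v i - s" for i
  define y where "y j = v (n+j) + s" for j
  define T where "T = (\<Sum>i\<in>I. \<bar>x i\<bar>) + (\<Sum>j\<in>I. \<bar>y j\<bar>)"
  define E where "E = exp 2 * b"
  have bpos: "b > 0" using b4 by simp
  have Epos: "E > 0" using bpos unfolding E_def by simp
  have Tb: "T \<le> 8 * E * \<delta>" using T_bound[OF v minv] unfolding T_def x_def y_def s_def E_def by simp
  have n1: "real n - 1 > 0" using n4 by simp
  have t0E: "t0 = 2 * (10 * E * \<delta> + \<delta>) * E / (real n - 1)" unfolding t0_def E_def by simp
  have "10 * E * \<delta> > 0" using dpos Epos by simp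
  then have "10 * E * \<delta> + \<delta> > 0" using dpos by linarith
  then have t0pos: "t0 > 0" unfolding t0E using dpos Epos n1 by (intro divide_pos_pos mult_pos_pos) auto
  have t0lt: "t0 < 1" using small unfolding t0_def by simp
  have key: "t0 / E * (real n - 1) = 2 * (10 * E * \<delta> + \<delta>)" unfolding t0E using n1 Epos by simp
  have hv: "hh v i j = x i + y j" for i j unfolding hh_def x_def y_def by simp
  have sb: "-1 \<le> s \<and> s \<le> 1"
  proof -
    have "(\<Sum>i\<in>I. v i) \<le> (\<Sum>i\<in>I. 1)" using box_bound[OF v] by (intro sum_mono) (auto simp: abs_le_iff)
    moreover have "(\<Sum>i\<in>I. -1) \<le> (\<Sum>i\<in>I. v i)" using box_bound[OF v] by (intro sum_mono) (auto simp: abs_le_iff)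
    ultimately have "- real n \<le> (\<Sum>i\<in>I. v i)" "(\<Sum>i\<in>I. v i) \<le> real n" by auto
    then show ?thesis unfolding s_def using n1 by (auto simp: divide_le_eq le_divide_eq)
  qed
  have Sy: "(\<Sum>j\<in>I-{i}. \<bar>y j\<bar>) \<le> T" for i
  proof -
    have "(\<Sum>j\<in>I-{i}. \<bar>y j\<bar>) \<le> (\<Sum>j\<in>I. \<bar>y j\<bar>)" by (rule sum_mono2) auto
    moreover have "(\<Sum>i\<in>I. \<bar>x i\<bar>) \<ge> 0" by (intro sum_nonneg) auto
    ultimately show ?thesis unfolding T_def by linarith
  qed
  have Sx: "(\<Sum>i\<in>I-{j}. \<bar>x i\<bar>) \<le> T" for j
  proof -
    have "(\<Sum>i\<in>I-{j}. \<bar>x i\<bar>) \<le> (\<Sum>i\<in>I. \<bar>x i\<bar>)" by (rule sum_mono2) auto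
    moreover have "(\<Sum>j\<in>I. \<bar>y j\<bar>) \<ge> 0" by (intro sum_nonneg) auto
    ultimately show ?thesis unfolding T_def by linarith
  qed
  have Frs: "Fr v i = (\<Sum>j\<in>I-{i}. mu (p0 i j + x i + y j) - mu (p0 i j)) + (\<Sum>j\<in>I-{i}. mu (p0 i j) - Y i j)" for i
    unfolding Fr_def hv by (simp add: sum.distrib[symmetric] add.assoc)
  have Fcs: "Fc v j = (\<Sum>i\<in>I-{j}. mu (p0 i j + y j + x i) - mu (p0 i j)) + (\<Sum>i\<in>I-{j}. mu (p0 i j) - Y i j)" for j
    unfolding Fc_def hv by (simp add: sum.distrib[symmetric] add_ac)
  have lowb: "m / E * (real n - 1) \<ge> 2 * (10 * E * \<delta> + \<delta>)" if "t0 \<le> m" for m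
  proof -
    have "t0 / E * (real n - 1) \<le> m / E * (real n - 1)"
      using that Epos n1 by (intro mult_right_mono divide_right_mono) auto
    then show ?thesis using key by simp
  qed
  have bnd: "0 < 2 * (10 * E * \<delta> + \<delta>) - 5/4 * T - \<delta>"
  proof -
    have e1: "2 * (10 * E * \<delta> + \<delta>) = 20 * (E * \<delta>) + 2 * \<delta>" by simp
    have e2: "8 * E * \<delta> = 8 * (E * \<delta>)" by simp
    show ?thesis unfolding e1 using Tb[unfolded e2] dpos mult_pos_pos[OF Epos dpos] by linarith
  qed
  have xb: "\<bar>x i\<bar> \<le> t0" if i: "i \<in> I" for i
  proof (rule ccontr)
    assume "\<not> \<bar>x i\<bar> \<le> t0"
    then consider "x i > t0" | "x i < - t0" by linarith
    then show False
    proof cases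
      case 1
      define m where "m = min (x i) 1"
      have m: "0 \<le> m" "m \<le> 1" "m \<le> x i" "t0 \<le> m" using 1 t0pos t0lt unfolding m_def by auto
      have "(\<Sum>j\<in>I-{i}. mu (p0 i j + x i + y j) - mu (p0 i j)) \<ge> m / (exp 2 * b) * card (I - {i}) - 5/4 * T"
        by (rule gen_lower[OF _ _ b4 m(1-3) Sy]) (use curv i in auto)
      then have "(\<Sum>j\<in>I-{i}. mu (p0 i j + x i + y j) - mu (p0 i j)) \<ge> 2 * (10 * E * \<delta> + \<delta>) - 5/4 * T"
        using lowb[OF m(4)] card_off[OF i] unfolding E_def by simp
      moreover have "(\<Sum>j\<in>I-{i}. mu (p0 i j) - Y i j) \<ge> - \<delta>" using rowd[OF i] by (simp add: abs_le_iff)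
      ultimately have "Fr v i > 0" unfolding Frs using bnd by linarith
      moreover have "v i > -1" using 1 t0pos sb unfolding x_def by simp
      then have "Fk v i \<le> 0" using KKT(2)[OF v minv, of i] i by auto
      ultimately show False using Fk_row[OF i] by simp
    next
      case 2
      define m where "m = min (- x i) 1"
      have m: "0 \<le> m" "m \<le> 1" "x i \<le> - m" "t0 \<le> m" using 2 t0pos t0lt unfolding m_def by auto
      have "(\<Sum>j\<in>I-{i}. mu (p0 i j + x i + y j) - mu (p0 i j)) \<le> - (m / (exp 2 * b) * card (I - {i})) + 5/4 * T"
        by (rule gen_upper[OF _ _ b4 m(1-3) Sy]) (use curv i in auto)
      then have "(\<Sum>j\<in>I-{i}. mu (p0 i j + x i + y j) - mu (p0 i j)) \<le> - (2 * (10 * E * \<delta> + \<delta>)) + 5/4 * T"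
        using lowb[OF m(4)] card_off[OF i] unfolding E_def by simp
      moreover have "(\<Sum>j\<in>I-{i}. mu (p0 i j) - Y i j) \<le> \<delta>" using rowd[OF i] by (simp add: abs_le_iff)
      ultimately have "Fr v i < 0" unfolding Frs using bnd by linarith
      moreover have "v i < 1" using 2 t0pos sb unfolding x_def by simp
      then have "Fk v i \<ge> 0" using KKT(1)[OF v minv, of i] i by auto
      ultimately show False using Fk_row[OF i] by simp
    qed
  qed
  have yb: "\<bar>y j\<bar> \<le> t0" if j: "j \<in> I" for j
  proof (rule ccontr)
    assume "\<not> \<bar>y j\<bar> \<le> t0"
    then consider "y j > t0" | "y j < - t0" by linarith
    then show False
    proof cases
      case 1
      define m where "m = min (y j) 1"
      have m: "0 \<le> m" "m \<le> 1" "m \<le> y j" "t0 \<le> m" using 1 t0pos t0lt unfolding m_def by auto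
      have "(\<Sum>i\<in>I-{j}. mu (p0 i j + y j + x i) - mu (p0 i j)) \<ge> m / (exp 2 * b) * card (I - {j}) - 5/4 * T"
        by (rule gen_lower[OF _ _ b4 m(1-3) Sx]) (use curv j in auto)
      then have "(\<Sum>i\<in>I-{j}. mu (p0 i j + y j + x i) - mu (p0 i j)) \<ge> 2 * (10 * E * \<delta> + \<delta>) - 5/4 * T"
        using lowb[OF m(4)] card_off[OF j] unfolding E_def by simp
      moreover have "(\<Sum>i\<in>I-{j}. mu (p0 i j) - Y i j) \<ge> - \<delta>" using cold[OF j] by (simp add: abs_le_iff)
      ultimately have "Fc v j > 0" unfolding Fcs using bnd by linarith
      moreover have "v (n+j) > -1" using 1 t0pos sb unfolding y_def by simp
      then have "Fk v (n+j) \<le> 0" using KKT(2)[OF v minv, of "n+j"] j by auto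
      ultimately show False using Fk_col[OF j] by simp
    next
      case 2
      define m where "m = min (- y j) 1"
      have m: "0 \<le> m" "m \<le> 1" "y j \<le> - m" "t0 \<le> m" using 2 t0pos t0lt unfolding m_def by auto
      have "(\<Sum>i\<in>I-{j}. mu (p0 i j + y j + x i) - mu (p0 i j)) \<le> - (m / (exp 2 * b) * card (I - {j})) + 5/4 * T"
        by (rule gen_upper[OF _ _ b4 m(1-3) Sx]) (use curv j in auto)
      then have "(\<Sum>i\<in>I-{j}. mu (p0 i j + y j + x i) - mu (p0 i j)) \<le> - (2 * (10 * E * \<delta> + \<delta>)) + 5/4 * T"
        using lowb[OF m(4)] card_off[OF j] unfolding E_def by simp
      moreover have "(\<Sum>i\<in>I-{j}. mu (p0 i j) - Y i j) \<le> \<delta>" using cold[OF j] by (simp add: abs_le_iff)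
      ultimately have "Fc v j < 0" unfolding Fcs using bnd by linarith
      moreover have "v (n+j) < 1" using 2 t0pos sb unfolding y_def by simp
      then have "Fk v (n+j) \<ge> 0" using KKT(1)[OF v minv, of "n+j"] j by auto
      ultimately show False using Fk_col[OF j] by simp
    qed
  qed
  define w where "w k = (if k \<in> I then x k else if k \<in> {n+1..2*n} then y (k - n) else 0)" for k
  have hw: "hh w i j = hh v i j" if "i \<in> I" "j \<in> I" for i j
    using that unfolding hv unfolding hh_def w_def by auto
  have wlt: "-1 < w k \<and> w k < 1" if "k \<in> {1..2*n}" for k
  proof (cases "k \<in> I")
    case True then show ?thesis unfolding w_def using xb[OF True] t0lt by auto
  next
    case False
    then have "k - n \<in> I" "k \<in> {n+1..2*n}" using that by auto
    then show ?thesis unfolding w_def using yb[of "k - n"] t0lt False by auto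
  qed
  have wB: "w \<in> Box"
    unfolding Box_def using wlt by (auto simp: w_def less_imp_le)
  have "Lf w = Lf v" unfolding Lf_def by (intro sum.cong refl) (auto simp: hw)
  then have minw: "\<forall>u\<in>Box. Lf w \<le> Lf u" using minv by simp
  have Frw: "Fr w i = 0" if i: "i \<in> I" for i
    using KKT[OF wB minw, of i] wlt[of i] Fk_row[OF i, of w] i by force
  have Fcw: "Fc w j = 0" if j: "j \<in> I" for j
    using KKT[OF wB minw, of "n+j"] wlt[of "n+j"] Fk_col[OF j, of w] j by force
  define a where "a i = x i + y n" for i
  define c where "c j = y j - y n" for j
  have nI: "n \<in> I" using n4 by simp
  have ac: "a i + c j = hh w i j" if "i \<in> I" "j \<in> I" for i j
    using that unfolding a_def c_def hw[OF that] hv by simp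
  show ?thesis
  proof (intro exI conjI ballI)
    show "c n = 0" unfolding c_def by simp
    show "\<bar>a i\<bar> \<le> 2 * t0" if "i \<in> I" for i
      using xb[OF that] yb[OF nI] unfolding a_def by linarith
    show "\<bar>c j\<bar> \<le> 2 * t0" if "j \<in> I" for j
      using yb[OF that] yb[OF nI] unfolding c_def by linarith
    show "(\<Sum>j\<in>I-{i}. mu (p0 i j + a i + c j) - Y i j) = 0" if i: "i \<in> I" for i
      using Frw[OF i] unfolding Fr_def by (metis (no_types, lifting) DiffD1 ac add.assoc i sum.cong)
    show "(\<Sum>i\<in>I-{j}. mu (p0 i j + a i + c j) - Y i j) = 0" if j: "j \<in> I" for j
      using Fcw[OF j] unfolding Fc_def by (metis (no_types, lifting) DiffD1 ac add.assoc j sum.cong)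
  qed
qed

lemma det_main':
  "\<exists>a c. c n = 0 \<and> (\<forall>i\<in>I. \<bar>a i\<bar> \<le> 2 * (2 * (10 * exp 2 * b * \<delta> + \<delta>) * (exp 2 * b) / (real n - 1)))
     \<and> (\<forall>j\<in>I. \<bar>c j\<bar> \<le> 2 * (2 * (10 * exp 2 * b * \<delta> + \<delta>) * (exp 2 * b) / (real n - 1)))
     \<and> (\<forall>i\<in>I. (\<Sum>j\<in>I-{i}. mu (p0 i j + a i + c j) - Y i j) = 0)
     \<and> (\<forall>j\<in>I. (\<Sum>i\<in>I-{j}. mu (p0 i j + a i + c j) - Y i j) = 0)"
  using det_main unfolding t0_def .

end


lemma hoeff_set:
  fixes D J :: "'a set" and q :: "'a \<Rightarrow> real"
  assumes fin: "finite D" and JD: "J \<subseteq> D" and Jne: "J \<noteq> {}" and q: "\<forall>k\<in>D. 0 \<le> q k \<and> q k \<le> 1" and eps: "\<epsilon> \<ge> 0"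
  shows "measure_pmf.prob (Pi_pmf D False (\<lambda>k. bernoulli_pmf (q k)))
           {A. \<bar>(\<Sum>k\<in>J. of_bool (A k)) - (\<Sum>k\<in>J. q k)\<bar> \<ge> \<epsilon>} \<le> 2 * exp (-2 * \<epsilon>^2 / card J)"
proof -
  define P where "P = Pi_pmf D False (\<lambda>k. bernoulli_pmf (q k))"
  have finJ: "finite J" using fin JD finite_subset by blast
  have ind0: "prob_space.indep_vars (measure_pmf P) (\<lambda>_. count_space UNIV) (\<lambda>x f. f x) D"
    unfolding P_def by (rule indep_vars_Pi_pmf[OF fin])
  have ind1: "prob_space.indep_vars (measure_pmf P) (\<lambda>_. count_space UNIV) (\<lambda>x f. f x) J"
    by (rule prob_space.indep_vars_subset[OF measure_pmf.prob_space_axioms ind0 JD])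
  have ind: "prob_space.indep_vars (measure_pmf P) (\<lambda>_. borel) (\<lambda>k A. (of_bool (A k) :: real)) J"
    by (rule prob_space.indep_vars_compose2[OF measure_pmf.prob_space_axioms ind1, of "\<lambda>_ b. of_bool b"]) auto
  have expct: "measure_pmf.expectation P (\<lambda>A. of_bool (A k) :: real) = q k" if "k \<in> J" for k
  proof -
    have "measure_pmf.expectation P (\<lambda>A. of_bool (A k) :: real)
        = measure_pmf.expectation (map_pmf (\<lambda>f. f k) P) (\<lambda>b. of_bool b :: real)"
      by simp
    also have "map_pmf (\<lambda>f. f k) P = bernoulli_pmf (q k)"
      unfolding P_def using that JD by (subst Pi_pmf_component[OF fin]) auto
    finally show ?thesis using q that JD by auto
  qed
  interpret H: Hoeffding_ineq "measure_pmf P" J "\<lambda>k A. of_bool (A k)" "\<lambda>_. 0" "\<lambda>_. 1" "\<Sum>k\<in>J. q k"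
  proof unfold_locales
    show "finite J" by (rule finJ)
    show "prob_space.indep_vars (measure_pmf P) (\<lambda>_. borel) (\<lambda>k A. of_bool (A k) :: real) J" by (rule ind)
    show "AE x in measure_pmf P. of_bool (x i) \<in> {0..1::real}" for i by simp
  qed (use expct in simp)
  have "measure_pmf.prob P {x \<in> space (measure_pmf P). \<bar>(\<Sum>i\<in>J. of_bool (x i)) - (\<Sum>k\<in>J. q k)\<bar> \<ge> \<epsilon>}
        \<le> 2 * exp (-2 * \<epsilon>\<^sup>2 / (\<Sum>i\<in>J. (1 - 0)\<^sup>2))"
    by (rule H.Hoeffding_ineq_abs_ge[OF eps]) (use finJ Jne in auto)
  then show ?thesis unfolding P_def by simp
qed

lemma exp_bound_n:
  assumes n: "n \<ge> 2"
  shows "2 * exp (-2 * (sqrt (real n * ln (real n)))^2 / real (n - 1)) \<le> 2 / (real n)^2"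
proof -
  have ln0: "ln (real n) \<ge> 0" using n by simp
  have sq: "(sqrt (real n * ln (real n)))^2 = real n * ln (real n)" using ln0 by simp
  have n1: "real (n - 1) > 0" "real (n - 1) \<le> real n" using n by auto
  have "real n * ln (real n) / real (n - 1) \<ge> ln (real n)"
    using n1 ln0 by (simp add: le_divide_eq mult_right_mono)
  then have "-2 * (real n * ln (real n)) / real (n - 1) \<le> -2 * ln (real n)" by simp
  then have "exp (-2 * (real n * ln (real n)) / real (n - 1)) \<le> exp (-2 * ln (real n))" by simp
  also have "exp (-2 * ln (real n)) = 1 / (real n)^2"
  proof -
    have "exp (2 * ln (real n)) = exp (ln (real n)) * exp (ln (real n))"
      unfolding mult_2 exp_add ..
    also have "\<dots> = (real n)^2" using n by (simp add: power2_eq_square)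
    finally have "exp (2 * ln (real n)) = (real n)^2" .
    then show ?thesis by (simp add: exp_minus inverse_eq_divide)
  qed
  finally show ?thesis unfolding sq by simp
qed

lemma prob_good:
  fixes f :: "nat \<Rightarrow> nat \<Rightarrow> real" and n :: nat
  assumes n: "n \<ge> 2" and f: "\<And>i j. 0 \<le> f i j \<and> f i j \<le> 1"
  shows "measure_pmf.prob (Pi_pmf (offdiag n) False (\<lambda>(i, j). bernoulli_pmf (f i j)))
     {A. (\<forall>i\<in>{1..n}. \<bar>(\<Sum>j\<in>{1..n}-{i}. of_bool (A (i, j))) - (\<Sum>j\<in>{1..n}-{i}. f i j)\<bar> < sqrt (real n * ln (real n)))
       \<and> (\<forall>j\<in>{1..n}. \<bar>(\<Sum>i\<in>{1..n}-{j}. of_bool (A (i, j))) - (\<Sum>i\<in>{1..n}-{j}. f i j)\<bar> < sqrt (real n * ln (real n)))}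
     \<ge> 1 - 4 / real n"
proof -
  define \<epsilon> where "\<epsilon> = sqrt (real n * ln (real n))"
  define q where "q = (\<lambda>(i, j). f i j)"
  define P where "P = Pi_pmf (offdiag n) False (\<lambda>k. bernoulli_pmf (q k))"
  have Peq: "Pi_pmf (offdiag n) False (\<lambda>(i, j). bernoulli_pmf (f i j)) = P"
    unfolding P_def q_def by (simp add: case_prod_unfold)
  have finD: "finite (offdiag n)"
    by (rule finite_subset[of _ "{1..n} \<times> {1..n}"]) (auto simp: offdiag_def)
  have qb: "\<forall>k\<in>offdiag n. 0 \<le> q k \<and> q k \<le> 1" using f unfolding q_def by auto
  have eps: "\<epsilon> \<ge> 0" unfolding \<epsilon>_def using n by simp
  define R where "R i = {A. \<bar>(\<Sum>j\<in>{1..n}-{i}. of_bool (A (i, j))) - (\<Sum>j\<in>{1..n}-{i}. f i j)\<bar> \<ge> \<epsilon>}" for i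
  define Cc where "Cc j = {A. \<bar>(\<Sum>i\<in>{1..n}-{j}. of_bool (A (i, j))) - (\<Sum>i\<in>{1..n}-{j}. f i j)\<bar> \<ge> \<epsilon>}" for j
  have cardn: "card ({1..n} - {i}) = n - 1" if "i \<in> {1..n}" for i using that by simp
  have bnd: "2 * exp (-2 * \<epsilon>^2 / real (n - 1)) \<le> 2 / (real n)^2"
    unfolding \<epsilon>_def by (rule exp_bound_n[OF n])
  have PR: "measure_pmf.prob P (R i) \<le> 2 / (real n)^2" if i: "i \<in> {1..n}" for i
  proof -
    define J where "J = (\<lambda>j. (i, j)) ` ({1..n} - {i})"
    have inj: "inj_on (\<lambda>j. (i, j)) ({1..n} - {i})" by (auto simp: inj_on_def)
    have JD: "J \<subseteq> offdiag n" unfolding J_def offdiag_def using i by auto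
    have cJ: "card J = n - 1" unfolding J_def using card_image[OF inj] cardn[OF i] by simp
    have Jne: "J \<noteq> {}" using cJ n by auto
    have s1: "(\<Sum>k\<in>J. (of_bool (A k) :: real)) = (\<Sum>j\<in>{1..n}-{i}. of_bool (A (i, j)))" for A
      by (simp only: J_def sum.reindex[OF inj] comp_def)
    have s2: "(\<Sum>k\<in>J. q k) = (\<Sum>j\<in>{1..n}-{i}. f i j)"
      by (simp only: J_def sum.reindex[OF inj] comp_def q_def prod.case)
    have "R i = {A. \<bar>(\<Sum>k\<in>J. of_bool (A k)) - (\<Sum>k\<in>J. q k)\<bar> \<ge> \<epsilon>}"
      unfolding R_def s1 s2 ..
    then have "measure_pmf.prob P (R i) \<le> 2 * exp (-2 * \<epsilon>^2 / card J)"
      unfolding P_def using hoeff_set[OF finD JD Jne qb eps] by simp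
    then show ?thesis using bnd cJ by simp
  qed
  have PC: "measure_pmf.prob P (Cc j) \<le> 2 / (real n)^2" if j: "j \<in> {1..n}" for j
  proof -
    define J where "J = (\<lambda>i. (i, j)) ` ({1..n} - {j})"
    have inj: "inj_on (\<lambda>i. (i, j)) ({1..n} - {j})" by (auto simp: inj_on_def)
    have JD: "J \<subseteq> offdiag n" unfolding J_def offdiag_def using j by auto
    have cJ: "card J = n - 1" unfolding J_def using card_image[OF inj] cardn[OF j] by simp
    have Jne: "J \<noteq> {}" using cJ n by auto
    have s1: "(\<Sum>k\<in>J. (of_bool (A k) :: real)) = (\<Sum>i\<in>{1..n}-{j}. of_bool (A (i, j)))" for A
      by (simp only: J_def sum.reindex[OF inj] comp_def)
    have s2: "(\<Sum>k\<in>J. q k) = (\<Sum>i\<in>{1..n}-{j}. f i j)"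
      by (simp only: J_def sum.reindex[OF inj] comp_def q_def prod.case)
    have "Cc j = {A. \<bar>(\<Sum>k\<in>J. of_bool (A k)) - (\<Sum>k\<in>J. q k)\<bar> \<ge> \<epsilon>}"
      unfolding Cc_def s1 s2 ..
    then have "measure_pmf.prob P (Cc j) \<le> 2 * exp (-2 * \<epsilon>^2 / card J)"
      unfolding P_def using hoeff_set[OF finD JD Jne qb eps] by simp
    then show ?thesis using bnd cJ by simp
  qed
  define B where "B = (\<Union>i\<in>{1..n}. R i) \<union> (\<Union>j\<in>{1..n}. Cc j)"
  have "measure_pmf.prob P B \<le> measure_pmf.prob P (\<Union>i\<in>{1..n}. R i) + measure_pmf.prob P (\<Union>j\<in>{1..n}. Cc j)"
    unfolding B_def by (rule measure_Un_le) auto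
  also have "measure_pmf.prob P (\<Union>i\<in>{1..n}. R i) \<le> (\<Sum>i\<in>{1..n}. measure_pmf.prob P (R i))"
    by (rule measure_pmf.finite_measure_subadditive_finite) auto
  also have "\<dots> \<le> (\<Sum>i\<in>{1..n}. 2 / (real n)^2)" by (intro sum_mono PR) auto
  also have "measure_pmf.prob P (\<Union>j\<in>{1..n}. Cc j) \<le> (\<Sum>j\<in>{1..n}. measure_pmf.prob P (Cc j))"
    by (rule measure_pmf.finite_measure_subadditive_finite) auto
  also have "\<dots> \<le> (\<Sum>j\<in>{1..n}. 2 / (real n)^2)" by (intro sum_mono PC) auto
  finally have "measure_pmf.prob P B \<le> 2 * (real n * (2 / (real n)^2))" by simp
  also have "\<dots> = 4 / real n" using n by (simp add: power2_eq_square field_simps)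
  finally have PB: "measure_pmf.prob P B \<le> 4 / real n" .
  have "UNIV - B \<subseteq> {A. (\<forall>i\<in>{1..n}. \<bar>(\<Sum>j\<in>{1..n}-{i}. of_bool (A (i, j))) - (\<Sum>j\<in>{1..n}-{i}. f i j)\<bar> < \<epsilon>)
       \<and> (\<forall>j\<in>{1..n}. \<bar>(\<Sum>i\<in>{1..n}-{j}. of_bool (A (i, j))) - (\<Sum>i\<in>{1..n}-{j}. f i j)\<bar> < \<epsilon>)}"
    unfolding B_def R_def Cc_def by (auto simp: not_le)
  then have "measure_pmf.prob P (UNIV - B) \<le> measure_pmf.prob P {A. (\<forall>i\<in>{1..n}. \<bar>(\<Sum>j\<in>{1..n}-{i}. of_bool (A (i, j))) - (\<Sum>j\<in>{1..n}-{i}. f i j)\<bar> < \<epsilon>)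
       \<and> (\<forall>j\<in>{1..n}. \<bar>(\<Sum>i\<in>{1..n}-{j}. of_bool (A (i, j))) - (\<Sum>i\<in>{1..n}-{j}. f i j)\<bar> < \<epsilon>)}"
    by (intro measure_pmf.finite_measure_mono) auto
  moreover have "measure_pmf.prob P (UNIV - B) = 1 - measure_pmf.prob P B"
    using measure_pmf.prob_compl[of B P] by simp
  ultimately show ?thesis using PB unfolding Peq \<epsilon>_def by linarith
qed



lemma mu_strict: "x < y \<Longrightarrow> mu x < mu y"
proof -
  assume xy: "x < y"
  obtain z where "mu y - mu x = (y - x) * mud z"
    using MVT2[OF xy, of mu mud] mu_deriv by auto
  then show ?thesis using mud_pos[of z] xy by (smt (verit) mult_pos_pos)
qed

lemma term_nonneg: "0 \<le> ((x::real) - y) * (mu x - mu y)"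
  using mu_mono[of x y] mu_mono[of y x]
  by (cases "x \<le> y") (auto intro: mult_nonpos_nonpos mult_nonneg_nonneg)

lemma term_zero: "((x::real) - y) * (mu x - mu y) = 0 \<Longrightarrow> x = y"
  using mu_strict[of x y] mu_strict[of y x] by (cases x y rule: linorder_cases) auto

lemma uniq:
  assumes n: "n \<ge> 3" and s1: "is_solution n Z A gam eta" and s2: "is_solution n Z A gam eta'"
  shows "\<forall>k\<in>{1..2*n-1}. eta k = eta' k"
proof -
  define I where "I = {1..n}"
  define P where "P i j = pi_ij n Z eta gam i j" for i j
  define P' where "P' i j = pi_ij n Z eta' gam i j" for i j
  define D where "D i = eta i - eta' i" for i
  define E where "E j = beta_of n eta j - beta_of n eta' j" for j
  have En: "E n = 0" unfolding E_def beta_of_def by simp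
  have PP: "P i j - P' i j = D i + E j" for i j
    unfolding P_def P'_def pi_ij_def D_def E_def alpha_of_def by simp
  have row: "(\<Sum>j\<in>I-{i}. mu (P i j) - mu (P' i j)) = 0" if i: "i \<in> I" for i
  proof -
    have k: "i \<in> {1..2*n-1}" "i \<le> n" using i n unfolding I_def by auto
    have "F_fun n Z A eta gam i = 0" "F_fun n Z A eta' gam i = 0"
      using s1 s2 k unfolding is_solution_def by auto
    then show ?thesis unfolding F_fun_def P_def P'_def I_def using k(2) by (simp add: sum_subtractf)
  qed
  have col: "(\<Sum>i\<in>I-{j}. mu (P i j) - mu (P' i j)) = 0" if j: "j \<in> {1..n-1}" for j
  proof -
    have k: "n + j \<in> {1..2*n-1}" "\<not> n + j \<le> n" using j n by auto
    have "F_fun n Z A eta gam (n+j) = 0" "F_fun n Z A eta' gam (n+j) = 0"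
      using s1 s2 k unfolding is_solution_def by auto
    then show ?thesis unfolding F_fun_def P_def P'_def I_def using k(2) by (simp add: sum_subtractf)
  qed
  have "(\<Sum>i\<in>I. \<Sum>j\<in>I-{i}. (P i j - P' i j) * (mu (P i j) - mu (P' i j))) = 0"
  proof -
    have "(\<Sum>i\<in>I. \<Sum>j\<in>I-{i}. (P i j - P' i j) * (mu (P i j) - mu (P' i j)))
        = (\<Sum>i\<in>I. \<Sum>j\<in>I-{i}. D i * (mu (P i j) - mu (P' i j))) + (\<Sum>i\<in>I. \<Sum>j\<in>I-{i}. E j * (mu (P i j) - mu (P' i j)))"
      unfolding PP by (simp only: distrib_right sum.distrib)
    also have "(\<Sum>i\<in>I. \<Sum>j\<in>I-{i}. E j * (mu (P i j) - mu (P' i j))) = (\<Sum>j\<in>I. \<Sum>i\<in>I-{j}. E j * (mu (P i j) - mu (P' i j)))"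
      by (rule sum_swap_off) (simp add: I_def)
    also have "\<dots> = (\<Sum>j\<in>I. E j * (\<Sum>i\<in>I-{j}. mu (P i j) - mu (P' i j)))" by (simp add: sum_distrib_left)
    also have "\<dots> = 0"
    proof (intro sum.neutral ballI)
      fix j assume j: "j \<in> I"
      show "E j * (\<Sum>i\<in>I-{j}. mu (P i j) - mu (P' i j)) = 0"
      proof (cases "j = n")
        case True then show ?thesis using En by simp
      next
        case False then have "j \<in> {1..n-1}" using j unfolding I_def by auto
        then show ?thesis using col by simp
      qed
    qed
    also have "(\<Sum>i\<in>I. \<Sum>j\<in>I-{i}. D i * (mu (P i j) - mu (P' i j))) = (\<Sum>i\<in>I. D i * (\<Sum>j\<in>I-{i}. mu (P i j) - mu (P' i j)))"
      by (simp add: sum_distrib_left)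
    also have "\<dots> = 0" using row by simp
    finally show ?thesis by simp
  qed
  then have "\<forall>i\<in>I. (\<Sum>j\<in>I-{i}. (P i j - P' i j) * (mu (P i j) - mu (P' i j))) = 0"
    by (subst (asm) sum_nonneg_eq_0_iff) (auto simp: I_def intro!: sum_nonneg term_nonneg)
  then have "\<forall>i\<in>I. \<forall>j\<in>I-{i}. (P i j - P' i j) * (mu (P i j) - mu (P' i j)) = 0"
    by (subst (asm) sum_nonneg_eq_0_iff) (auto simp: I_def intro!: sum_nonneg term_nonneg)
  then have z: "D i + E j = 0" if "i \<in> I" "j \<in> I" "i \<noteq> j" for i j
    using that term_zero PP by (metis Diff_iff eq_iff_diff_eq_0 singletonD)
  have nI: "n \<in> I" "1 \<in> I" "2 \<in> I" using n unfolding I_def by auto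
  have Di: "D i = 0" if "i \<in> I" "i \<noteq> n" for i using z[OF that(1) nI(1) that(2)] En by simp
  have Ej: "E j = 0" if "j \<in> {1..n-1}" for j
  proof -
    define i where "i = (if j = 1 then 2 else (1::nat))"
    have "i \<in> I" "i \<noteq> j" "i \<noteq> n" using nI n that unfolding i_def I_def by auto
    moreover have "j \<in> I" using that unfolding I_def by auto
    ultimately show ?thesis using z Di by fastforce
  qed
  have Dn: "D n = 0"
  proof -
    have "E 1 = 0" using Ej[of 1] n by auto
    then show ?thesis using z[OF nI(1) nI(2)] n by simp
  qed
  show ?thesis
  proof
    fix k assume k: "k \<in> {1..2*n-1}"
    show "eta k = eta' k"
    proof (cases "k \<le> n")
      case True
      then have "D k = 0" using Di[of k] Dn k unfolding I_def by (cases "k = n") auto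
      then show ?thesis unfolding D_def by simp
    next
      case False
      then have j: "k - n \<in> {1..n-1}" using k by auto
      have "E (k - n) = 0" by (rule Ej[OF j])
      moreover have "k - n \<noteq> n" using j by auto
      ultimately show ?thesis unfolding E_def beta_of_def using False by simp
    qed
  qed
qed

lemma inner_bound: "\<bar>(x::real^'p) \<bullet> y\<bar> \<le> real CARD('p) * infnorm x * infnorm y"
proof -
  have "\<bar>x \<bullet> y\<bar> = \<bar>\<Sum>i\<in>UNIV. x $ i * y $ i\<bar>" by (simp add: inner_vec_def)
  also have "\<dots> \<le> (\<Sum>i\<in>UNIV. \<bar>x $ i\<bar> * \<bar>y $ i\<bar>)" by (rule order_trans[OF sum_abs]) (simp add: abs_mult)
  also have "\<dots> \<le> (\<Sum>i\<in>(UNIV::'p set). infnorm x * infnorm y)"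
    by (intro sum_mono mult_mono component_le_infnorm_cart) (auto simp: infnorm_pos_le)
  also have "\<dots> = real CARD('p) * infnorm x * infnorm y" by simp
  finally show ?thesis .
qed

lemma zmax_ge: "(i, j) \<in> offdiag n \<Longrightarrow> infnorm (Z i j) \<le> z_max n Z"
proof -
  assume ij: "(i, j) \<in> offdiag n"
  have fin: "finite (offdiag n)"
    by (rule finite_subset[of _ "{1..n} \<times> {1..n}"]) (auto simp: offdiag_def)
  show ?thesis unfolding z_max_def
    by (rule Max_ge) (use fin ij in \<open>auto intro!: image_eqI[where x="(i,j)"]\<close>)
qed

lemma sqrt_id: "real n > 0 \<Longrightarrow> real n * sqrt (ln (real n) / real n) = sqrt (real n * ln (real n))"
proof -
  assume n: "real n > 0"
  have "real n = sqrt (real n) * sqrt (real n)" using n by simp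
  then have "real n * sqrt (ln (real n) / real n) = sqrt (real n) * (sqrt (real n) * sqrt (ln (real n) / real n))"
    by (metis mult.assoc)
  also have "sqrt (real n) * sqrt (ln (real n) / real n) = sqrt (ln (real n))"
    using n by (simp add: real_sqrt_mult[symmetric])
  finally show ?thesis by (simp add: real_sqrt_mult)
qed

lemma abs_tri3: "(X::real) = U - V \<Longrightarrow> \<bar>U\<bar> \<le> s / 4 \<Longrightarrow> \<bar>V\<bar> < s \<Longrightarrow> \<bar>X\<bar> \<le> 5/4 * s"
proof -
  assume a: "X = U - V" "\<bar>U\<bar> \<le> s / 4" "\<bar>V\<bar> < s"
  have "\<bar>X\<bar> \<le> \<bar>U\<bar> + \<bar>V\<bar>" using a(1) abs_triangle_ineq4[of U V] by simp
  then show ?thesis using a by linarith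
qed

lemma exist_n:
  fixes Z :: "nat \<Rightarrow> nat \<Rightarrow> real^'p" and etas :: "nat \<Rightarrow> real" and gams gam :: "real^'p"
  assumes n4: "n \<ge> 4"
    and hg: "infnorm (gam - gams) \<le> e2"
    and hz: "e2 * (real CARD('p) * z_max n Z) \<le> sqrt (ln (real n) / real n)"
    and hb: "\<And>i j. (i, j) \<in> offdiag n \<Longrightarrow> (1 + exp (pi_ij n Z etas gam i j))^2 / exp (pi_ij n Z etas gam i j) \<le> b"
    and small: "2 * (10 * exp 2 * b * (5/4 * sqrt (real n * ln (real n))) + 5/4 * sqrt (real n * ln (real n)))
                   * (exp 2 * b) / (real n - 1) < 1"
    and goodr: "\<forall>i\<in>{1..n}. \<bar>(\<Sum>j\<in>{1..n}-{i}. of_bool (A (i, j))) - (\<Sum>j\<in>{1..n}-{i}. mu (pi_ij n Z etas gams i j))\<bar> < sqrt (real n * ln (real n))"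
    and goodc: "\<forall>j\<in>{1..n}. \<bar>(\<Sum>i\<in>{1..n}-{j}. of_bool (A (i, j))) - (\<Sum>i\<in>{1..n}-{j}. mu (pi_ij n Z etas gams i j))\<bar> < sqrt (real n * ln (real n))"
  shows "\<exists>eta. is_solution n Z A gam eta \<and> eta_dist n eta etas \<le>
           2 * (2 * (10 * exp 2 * b * (5/4 * sqrt (real n * ln (real n))) + 5/4 * sqrt (real n * ln (real n)))
                   * (exp 2 * b) / (real n - 1))"
proof -
  define \<delta> where "\<delta> = 5/4 * sqrt (real n * ln (real n))"
  define p0 where "p0 i j = pi_ij n Z etas gam i j" for i j
  define ps where "ps i j = pi_ij n Z etas gams i j" for i j
  define Y where "Y i j = (of_bool (A (i, j)) :: real)" for i j
  have npos: "real n > 0" using n4 by simp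
  have lnpos: "ln (real n) > 0" using n4 by simp
  have q0: "0 \<le> ln (real n) / real n" using lnpos npos by simp
  have zpos: "z_max n Z \<ge> 0"
    using zmax_ge[of 1 2 n Z] n4 infnorm_pos_le[of "Z 1 2"] by (auto simp: offdiag_def)
  have shift: "\<bar>p0 i j - ps i j\<bar> \<le> sqrt (ln (real n) / real n)" if "(i, j) \<in> offdiag n" for i j
  proof -
    have "p0 i j - ps i j = Z i j \<bullet> (gam - gams)" unfolding p0_def ps_def pi_ij_def by (simp add: inner_diff_right)
    then have "\<bar>p0 i j - ps i j\<bar> \<le> real CARD('p) * infnorm (Z i j) * infnorm (gam - gams)"
      using inner_bound by simp
    also have "\<dots> \<le> real CARD('p) * z_max n Z * e2"
      by (intro mult_mono zmax_ge[OF that] hg) (auto simp: infnorm_pos_le zpos)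
    also have "\<dots> \<le> sqrt (ln (real n) / real n)" using hz by (simp add: algebra_simps)
    finally show ?thesis .
  qed
  have shsum: "\<bar>(\<Sum>j\<in>S. mu (p0 i j) - mu (ps i j))\<bar> \<le> sqrt (real n * ln (real n)) / 4"
    if S: "S \<subseteq> {1..n}" "card S = n - 1" and off: "\<And>j. j \<in> S \<Longrightarrow> (i, j) \<in> offdiag n" for S i
  proof -
    have "\<bar>(\<Sum>j\<in>S. mu (p0 i j) - mu (ps i j))\<bar> \<le> (\<Sum>j\<in>S. \<bar>mu (p0 i j) - mu (ps i j)\<bar>)" by (rule sum_abs)
    also have "\<dots> \<le> (\<Sum>j\<in>S. sqrt (ln (real n) / real n) / 4)"
    proof (intro sum_mono)
      fix j assume "j \<in> S"
      show "\<bar>mu (p0 i j) - mu (ps i j)\<bar> \<le> sqrt (ln (real n) / real n) / 4"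
        using order_trans[OF mu_lip divide_right_mono[OF shift[OF off[OF \<open>j \<in> S\<close>]]]] by simp
    qed
    also have "\<dots> = real (n - 1) * sqrt (ln (real n) / real n) / 4" using S by simp
    also have "\<dots> \<le> real n * sqrt (ln (real n) / real n) / 4"
      using mult_right_mono[of "real (n - 1)" "real n" "sqrt (ln (real n) / real n)"] q0 by simp
    also have "\<dots> = sqrt (real n * ln (real n)) / 4" using sqrt_id[OF npos] by simp
    finally show ?thesis .
  qed
  have shsumc: "\<bar>(\<Sum>i\<in>S. mu (p0 i j) - mu (ps i j))\<bar> \<le> sqrt (real n * ln (real n)) / 4"
    if S: "S \<subseteq> {1..n}" "card S = n - 1" and off: "\<And>i. i \<in> S \<Longrightarrow> (i, j) \<in> offdiag n" for S j
  proof -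
    have "\<bar>(\<Sum>i\<in>S. mu (p0 i j) - mu (ps i j))\<bar> \<le> (\<Sum>i\<in>S. \<bar>mu (p0 i j) - mu (ps i j)\<bar>)" by (rule sum_abs)
    also have "\<dots> \<le> (\<Sum>i\<in>S. sqrt (ln (real n) / real n) / 4)"
    proof (intro sum_mono)
      fix i assume "i \<in> S"
      show "\<bar>mu (p0 i j) - mu (ps i j)\<bar> \<le> sqrt (ln (real n) / real n) / 4"
        using order_trans[OF mu_lip divide_right_mono[OF shift[OF off[OF \<open>i \<in> S\<close>]]]] by simp
    qed
    also have "\<dots> = real (n - 1) * sqrt (ln (real n) / real n) / 4" using S by simp
    also have "\<dots> \<le> real n * sqrt (ln (real n) / real n) / 4"
      using mult_right_mono[of "real (n - 1)" "real n" "sqrt (ln (real n) / real n)"] q0 by simp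
    also have "\<dots> = sqrt (real n * ln (real n)) / 4" using sqrt_id[OF npos] by simp
    finally show ?thesis .
  qed
  interpret det n p0 Y b \<delta>
  proof unfold_locales
    show "4 \<le> n" by (rule n4)
    show "(1 + exp (p0 i j))^2 / exp (p0 i j) \<le> b" if "i \<in> {1..n}" "j \<in> {1..n}" "i \<noteq> j" for i j
      using hb[of i j] that unfolding p0_def offdiag_def by auto
    show "\<bar>\<Sum>j\<in>{1..n}-{i}. mu (p0 i j) - Y i j\<bar> \<le> \<delta>" if i: "i \<in> {1..n}" for i
    proof -
      have "(\<Sum>j\<in>{1..n}-{i}. mu (p0 i j) - Y i j) = (\<Sum>j\<in>{1..n}-{i}. mu (p0 i j) - mu (ps i j))
             - ((\<Sum>j\<in>{1..n}-{i}. of_bool (A (i, j))) - (\<Sum>j\<in>{1..n}-{i}. mu (pi_ij n Z etas gams i j)))"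
        unfolding Y_def ps_def by (simp add: sum_subtractf)
      moreover have "\<bar>(\<Sum>j\<in>{1..n}-{i}. mu (p0 i j) - mu (ps i j))\<bar> \<le> sqrt (real n * ln (real n)) / 4"
        by (rule shsum) (use i in \<open>auto simp: offdiag_def\<close>)
      ultimately show ?thesis using goodr[rule_format, OF i] unfolding \<delta>_def by (rule abs_tri3)
    qed
    show "\<bar>\<Sum>i\<in>{1..n}-{j}. mu (p0 i j) - Y i j\<bar> \<le> \<delta>" if j: "j \<in> {1..n}" for j
    proof -
      have "(\<Sum>i\<in>{1..n}-{j}. mu (p0 i j) - Y i j) = (\<Sum>i\<in>{1..n}-{j}. mu (p0 i j) - mu (ps i j))
             - ((\<Sum>i\<in>{1..n}-{j}. of_bool (A (i, j))) - (\<Sum>i\<in>{1..n}-{j}. mu (pi_ij n Z etas gams i j)))"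
        unfolding Y_def ps_def by (simp add: sum_subtractf)
      moreover have "\<bar>(\<Sum>i\<in>{1..n}-{j}. mu (p0 i j) - mu (ps i j))\<bar> \<le> sqrt (real n * ln (real n)) / 4"
        by (rule shsumc) (use j in \<open>auto simp: offdiag_def\<close>)
      ultimately show ?thesis using goodc[rule_format, OF j] unfolding \<delta>_def by (rule abs_tri3)
    qed
    show "\<delta> > 0" unfolding \<delta>_def using npos lnpos by simp
    show "2 * (10 * exp 2 * b * \<delta> + \<delta>) * (exp 2 * b) / (real n - 1) < 1"
      using small unfolding \<delta>_def .
  qed
  define t0 where "t0 = 2 * (10 * exp 2 * b * \<delta> + \<delta>) * (exp 2 * b) / (real n - 1)"
  obtain a c where ac: "c n = 0" "\<forall>i\<in>{1..n}. \<bar>a i\<bar> \<le> 2 * t0" "\<forall>j\<in>{1..n}. \<bar>c j\<bar> \<le> 2 * t0"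
     "\<forall>i\<in>{1..n}. (\<Sum>j\<in>{1..n}-{i}. mu (p0 i j + a i + c j) - Y i j) = 0"
     "\<forall>j\<in>{1..n}. (\<Sum>i\<in>{1..n}-{j}. mu (p0 i j + a i + c j) - Y i j) = 0"
    using det_main' unfolding t0_def by blast
  define eta where "eta k = (if k \<le> n then etas k + a k else if k \<le> 2*n-1 then etas k + c (k - n) else etas k)" for k
  have pe: "pi_ij n Z eta gam i j = p0 i j + a i + c j" if "i \<in> {1..n}" "j \<in> {1..n}" for i j
  proof (cases "j = n")
    case True then show ?thesis using that ac(1) unfolding p0_def pi_ij_def alpha_of_def beta_of_def eta_def by simp
  next
    case False
    then have "n + j \<le> 2*n - 1" "\<not> n + j \<le> n" using that by auto
    then show ?thesis using that False unfolding p0_def pi_ij_def alpha_of_def beta_of_def eta_def by simp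
  qed
  have sol: "is_solution n Z A gam eta"
    unfolding is_solution_def
  proof
    fix k assume k: "k \<in> {1..2*n-1}"
    show "F_fun n Z A eta gam k = 0"
    proof (cases "k \<le> n")
      case True
      then have kI: "k \<in> {1..n}" using k by auto
      have "F_fun n Z A eta gam k = (\<Sum>j\<in>{1..n}-{k}. mu (p0 k j + a k + c j) - Y k j)"
        unfolding F_fun_def outdeg_def Y_def using True kI pe by (simp add: sum_subtractf)
      then show ?thesis using ac(4) kI by simp
    next
      case False
      then have jI: "k - n \<in> {1..n}" using k by auto
      have "F_fun n Z A eta gam k = (\<Sum>i\<in>{1..n}-{k-n}. mu (p0 i (k-n) + a i + c (k-n)) - Y i (k-n))"
        unfolding F_fun_def indeg_def Y_def using False jI pe by (simp add: sum_subtractf)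
      then show ?thesis using ac(5) jI by simp
    qed
  qed
  have dist: "eta_dist n eta etas \<le> 2 * t0"
    unfolding eta_dist_def
  proof (subst Max_le_iff)
    show "finite ((\<lambda>k. \<bar>eta k - etas k\<bar>) ` {1..2*n-1})" by simp
    show "(\<lambda>k. \<bar>eta k - etas k\<bar>) ` {1..2*n-1} \<noteq> {}" using n4 by simp
    show "\<forall>a\<in>(\<lambda>k. \<bar>eta k - etas k\<bar>) ` {1..2*n-1}. a \<le> 2 * t0"
    proof
      fix z assume "z \<in> (\<lambda>k. \<bar>eta k - etas k\<bar>) ` {1..2*n-1}"
      then obtain k where k: "k \<in> {1..2*n-1}" "z = \<bar>eta k - etas k\<bar>" by auto
      show "z \<le> 2 * t0"
      proof (cases "k \<le> n")
        case True then show ?thesis using k ac(2) unfolding eta_def by auto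
      next
        case False
        then have "k - n \<in> {1..n}" using k by auto
        then show ?thesis using k ac(3) False unfolding eta_def by auto
      qed
    qed
  qed
  show ?thesis using sol dist[unfolded t0_def \<delta>_def] by blast
qed



lemma mu_01: "0 \<le> mu x \<and> mu x \<le> 1"
  unfolding mu_def using ep[of x] by (auto simp: divide_simps)

lemma curv_le: "(1 + exp (x::real))^2 / exp x \<le> 2 + 2 * exp \<bar>x\<bar>"
proof -
  have "(1 + exp x)^2 / exp x = exp (-x) + 2 + exp x"
    by (simp add: exp_minus field_simps power2_eq_square)
  moreover have "exp (-x) \<le> exp \<bar>x\<bar>" "exp x \<le> exp \<bar>x\<bar>" by auto
  ultimately show ?thesis by linarith
qed

lemma bn_bdd:
  fixes Z :: "nat \<Rightarrow> nat \<Rightarrow> real^'p"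
  assumes e1: "e1 \<ge> 0"
  shows "bdd_above {(1 + exp (pi_ij n Z eta gam i j))^2 / exp (pi_ij n Z eta gam i j) | eta gam i j.
            (\<forall>k \<in> {1..2*n-1}. \<bar>eta k - etas k\<bar> \<le> e1) \<and> infnorm (gam - gams) \<le> e2
            \<and> (i, j) \<in> offdiag n}"
proof -
  define R where "R = Max ((\<lambda>k. \<bar>etas k\<bar>) ` {1..2*n-1})"
  define M where "M = (R + e1) + (R + e1) + real CARD('p) * \<bar>z_max n Z\<bar> * (infnorm gams + \<bar>e2\<bar>)"
  have Rge: "\<bar>etas k\<bar> \<le> R" if "k \<in> {1..2*n-1}" for k
    unfolding R_def using that by (intro Max_ge) auto
  have piM: "\<bar>pi_ij n Z eta gam i j\<bar> \<le> M"
    if c: "\<forall>k \<in> {1..2*n-1}. \<bar>eta k - etas k\<bar> \<le> e1" "infnorm (gam - gams) \<le> e2" "(i, j) \<in> offdiag n"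
    for eta gam i j
  proof -
    have ij: "i \<in> {1..n}" "j \<in> {1..n}" using c(3) unfolding offdiag_def by auto
    have a: "\<bar>alpha_of eta i\<bar> \<le> R + e1"
    proof -
      have "i \<in> {1..2*n-1}" using ij by auto
      moreover have "\<bar>eta i - etas i\<bar> \<le> e1" using c(1) calculation by blast
      ultimately show ?thesis unfolding alpha_of_def using Rge[of i] by simp
    qed
    have b: "\<bar>beta_of n eta j\<bar> \<le> R + e1"
    proof (cases "j = n")
      case True
      have "1 \<in> {1..2*n-1}" using ij by auto
      then have "0 \<le> R" using Rge[of 1] by linarith
      then show ?thesis unfolding beta_of_def using e1 True by simp
    next
      case False
      then have "n + j \<in> {1..2*n-1}" using ij by auto
      moreover have "\<bar>eta (n+j) - etas (n+j)\<bar> \<le> e1" using c(1) calculation by blast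
      ultimately show ?thesis unfolding beta_of_def using Rge[of "n+j"] False by simp
    qed
    have g: "infnorm gam \<le> infnorm gams + \<bar>e2\<bar>"
      using infnorm_triangle[of gams "gam - gams"] c(2) by simp
    have z: "\<bar>Z i j \<bullet> gam\<bar> \<le> real CARD('p) * \<bar>z_max n Z\<bar> * (infnorm gams + \<bar>e2\<bar>)"
    proof -
      have "\<bar>Z i j \<bullet> gam\<bar> \<le> real CARD('p) * infnorm (Z i j) * infnorm gam" by (rule inner_bound)
      also have "\<dots> \<le> real CARD('p) * \<bar>z_max n Z\<bar> * (infnorm gams + \<bar>e2\<bar>)"
        using zmax_ge[OF c(3), of Z] g by (intro mult_mono) (auto simp: infnorm_pos_le)
      finally show ?thesis .
    qed
    have t: "\<bar>alpha_of eta i + beta_of n eta j + Z i j \<bullet> gam\<bar> \<le> \<bar>alpha_of eta i\<bar> + \<bar>beta_of n eta j\<bar> + \<bar>Z i j \<bullet> gam\<bar>"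
      using abs_triangle_ineq[of "alpha_of eta i + beta_of n eta j" "Z i j \<bullet> gam"] abs_triangle_ineq[of "alpha_of eta i" "beta_of n eta j"] by linarith
    show ?thesis unfolding pi_ij_def M_def using a b z t by linarith
  qed
  show ?thesis
  proof (rule bdd_aboveI[of _ "2 + 2 * exp M"])
    fix x assume "x \<in> {(1 + exp (pi_ij n Z eta gam i j))^2 / exp (pi_ij n Z eta gam i j) | eta gam i j.
            (\<forall>k \<in> {1..2*n-1}. \<bar>eta k - etas k\<bar> \<le> e1) \<and> infnorm (gam - gams) \<le> e2
            \<and> (i, j) \<in> offdiag n}"
    then obtain eta gam i j where x: "x = (1 + exp (pi_ij n Z eta gam i j))^2 / exp (pi_ij n Z eta gam i j)"
      and c: "\<forall>k \<in> {1..2*n-1}. \<bar>eta k - etas k\<bar> \<le> e1" "infnorm (gam - gams) \<le> e2" "(i, j) \<in> offdiag n"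
      by blast
    have "exp \<bar>pi_ij n Z eta gam i j\<bar> \<le> exp M" using piM[OF c] by simp
    then show "x \<le> 2 + 2 * exp M" unfolding x using curv_le[of "pi_ij n Z eta gam i j"] by linarith
  qed
qed

lemma bn_ge:
  fixes Z :: "nat \<Rightarrow> nat \<Rightarrow> real^'p"
  assumes e1: "e1 > 0" and g: "infnorm (gam - gams) \<le> e2" and ij: "(i, j) \<in> offdiag n"
  shows "(1 + exp (pi_ij n Z etas gam i j))^2 / exp (pi_ij n Z etas gam i j) \<le> b_n n Z etas gams e1 e2"
  unfolding b_n_def
proof (rule cSup_upper[OF _ bn_bdd])
  show "0 \<le> e1" using e1 by simp
  show "(1 + exp (pi_ij n Z etas gam i j))^2 / exp (pi_ij n Z etas gam i j) \<in> {(1 + exp (pi_ij n Z eta gam i j))^2 / exp (pi_ij n Z eta gam i j) | eta gam i j.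
            (\<forall>k \<in> {1..2*n-1}. \<bar>eta k - etas k\<bar> \<le> e1) \<and> infnorm (gam - gams) \<le> e2
            \<and> (i, j) \<in> offdiag n}"
    by (rule CollectI, rule exI[of _ etas], rule exI[of _ gam], rule exI[of _ i], rule exI[of _ j]) (use e1 g ij in auto)
qed

lemma lim_part:
  fixes b :: "nat \<Rightarrow> real"
  assumes "b \<in> o(\<lambda>n. (real n / ln (real n)) powr (1/12))"
  shows "(\<lambda>n. b n ^ 3 * sqrt (ln (real n) / real n)) \<longlonglongrightarrow> 0"
proof -
  define f where "f n = (real n / ln (real n)) powr (1/12)" for n :: nat
  have q: "(\<lambda>n. b n / f n) \<longlonglongrightarrow> 0" using smalloD_tendsto[OF assms] unfolding f_def by simp
  have r: "(\<lambda>n. f n ^ 3 * sqrt (ln (real n) / real n)) \<longlonglongrightarrow> 0" unfolding f_def by real_asymp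
  have "(\<lambda>n. (b n / f n) ^ 3 * (f n ^ 3 * sqrt (ln (real n) / real n))) \<longlonglongrightarrow> 0 ^ 3 * 0"
    by (intro tendsto_intros q r)
  moreover have ev: "eventually (\<lambda>n. (b n / f n) ^ 3 * (f n ^ 3 * sqrt (ln (real n) / real n)) = b n ^ 3 * sqrt (ln (real n) / real n)) sequentially"
  proof -
    have "eventually (\<lambda>n. f n \<noteq> 0) sequentially"
      using eventually_ge_at_top[of "3::nat"]
    proof eventually_elim
      case (elim n)
      then have "ln (real n) > 0" by simp
      moreover have "real n > 0" using elim by simp
      ultimately show ?case unfolding f_def by simp
    qed
    then show ?thesis by eventually_elim (simp add: power_divide)
  qed
  ultimately show ?thesis using Lim_transform_eventually[OF _ ev] by simp
qed



lemma t0_bound: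
  assumes n: "n \<ge> 4" and b: "b \<ge> 4"
  shows "2 * (10 * exp 2 * b * (5/4 * sqrt (real n * ln (real n))) + 5/4 * sqrt (real n * ln (real n)))
            * (exp 2 * b) / (real n - 1) \<le> 55 * (exp 2)^2 * b^3 * sqrt (ln (real n) / real n)"
proof -
  define E where "E = exp (2::real)"
  define q where "q = sqrt (ln (real n) / real n)"
  have npos: "real n > 0" using n by simp
  have n1: "real n - 1 > 0" using n by simp
  have q0: "q \<ge> 0" unfolding q_def using n by simp
  have E1: "E \<ge> 1" unfolding E_def by simp
  have Eb: "E * b \<ge> 1" using E1 b by (metis mult_mono order.trans one_le_numeral mult_1_left zero_le_one)
  have s: "sqrt (real n * ln (real n)) = real n * q" unfolding q_def using sqrt_id[OF npos] by simp
  have LHS: "2 * (10 * E * b * (5/4 * sqrt (real n * ln (real n))) + 5/4 * sqrt (real n * ln (real n))) * (E * b) / (real n - 1)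
     = 5/2 * (((10 * (E * b) + 1) * (E * b)) * (real n / (real n - 1))) * q"
    unfolding s using n1 by (simp add: field_simps)
  have r: "real n / (real n - 1) \<le> 2" using n1 n by (simp add: divide_le_eq)
  have a: "(10 * (E * b) + 1) * (E * b) \<le> 11 * (E * b)^2"
  proof -
    have "(E * b) * 1 \<le> (E * b) * (E * b)" using Eb by (intro mult_left_mono) auto
    then show ?thesis by (simp add: power2_eq_square algebra_simps)
  qed
  have m: "((10 * (E * b) + 1) * (E * b)) * (real n / (real n - 1)) \<le> (11 * (E * b)^2) * 2"
    by (rule mult_mono[OF a r]) (use n1 in auto)
  have "5/2 * (((10 * (E * b) + 1) * (E * b)) * (real n / (real n - 1))) * q \<le> 5/2 * ((11 * (E * b)^2) * 2) * q"
    by (rule mult_right_mono[OF mult_left_mono[OF m]]) (use q0 in auto)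
  also have "\<dots> = 55 * E^2 * b^2 * q" by (simp add: power2_eq_square)
  also have "\<dots> \<le> 55 * E^2 * b^3 * q"
  proof -
    have "b^2 \<le> b^3" using b by (simp add: power2_eq_square power3_eq_cube)
    then show ?thesis using q0 by (intro mult_right_mono mult_left_mono) auto
  qed
  finally show ?thesis using LHS unfolding E_def q_def by simp
qed

theorem lemma1:
  fixes Z :: "nat \<Rightarrow> nat \<Rightarrow> nat \<Rightarrow> real^'p"
    and etas :: "nat \<Rightarrow> nat \<Rightarrow> real"
    and gams :: "nat \<Rightarrow> real^'p"
    and gam :: "nat \<Rightarrow> real^'p"
    and eps1 eps2 :: "nat \<Rightarrow> real"
    and K :: "real set"
  assumes "compact K"
    and "\<forall>n i j k. (i, j) \<in> offdiag n \<longrightarrow> Z n i j $ k \<in> K"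
    and "\<forall>n. eps1 n > 0" and "eps1 \<longlonglongrightarrow> 0"
    and "\<forall>n. eps2 n > 0"
    and "\<forall>n\<ge>2. eps2 n * (real CARD('p) * z_max n (Z n)) \<le> sqrt (ln (real n) / real n)"
    and "\<forall>n. infnorm (gam n - gams n) \<le> eps2 n"
    and "(\<lambda>n. b_n n (Z n) (etas n) (gams n) (eps1 n) (eps2 n))
           \<in> o(\<lambda>n. (real n / ln (real n)) powr (1/12))"
  shows "(\<exists>C>0. \<forall>\<^sub>F n in sequentially.
            measure_pmf.prob (adj_pmf n (Z n) (etas n) (gams n))
              {A. \<exists>eta. is_solution n (Z n) A (gam n) eta \<and>
                   eta_dist n eta (etas n)
                     \<le> C * b_n n (Z n) (etas n) (gams n) (eps1 n) (eps2 n) ^ 3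
                           * sqrt (ln (real n) / real n)}
            \<ge> 1 - C / real n)
       \<and> (\<lambda>n. b_n n (Z n) (etas n) (gams n) (eps1 n) (eps2 n) ^ 3 * sqrt (ln (real n) / real n))
            \<longlonglongrightarrow> 0
       \<and> (\<forall>\<^sub>F n in sequentially. \<forall>A eta eta'.
            is_solution n (Z n) A (gam n) eta \<and> is_solution n (Z n) A (gam n) eta'
            \<longrightarrow> (\<forall>k \<in> {1..2*n-1}. eta k = eta' k))"
proof -
  note a = assms
  define bn where "bn n = b_n n (Z n) (etas n) (gams n) (eps1 n) (eps2 n)" for n
  define q where "q n = sqrt (ln (real n) / real n)" for n :: nat
  define E where "E = exp (2::real)"
  define C where "C = 110 * E^2 + 4"
  have Epos: "E > 0" unfolding E_def by simp
  have Cpos: "C > 0" unfolding C_def by (simp add: add_nonneg_pos)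
  have lim: "(\<lambda>n. bn n ^ 3 * q n) \<longlonglongrightarrow> 0"
    using lim_part[OF a(8)] unfolding bn_def q_def .
  have bn_curv: "(1 + exp (pi_ij n (Z n) (etas n) (gam n) i j))^2 / exp (pi_ij n (Z n) (etas n) (gam n) i j) \<le> bn n"
    if "(i, j) \<in> offdiag n" for n i j
    unfolding bn_def by (rule bn_ge) (use a(3) a(7) that in auto)
  have bn4: "bn n \<ge> 4" if "n \<ge> 2" for n
  proof -
    have "(1, 2) \<in> offdiag n" using that unfolding offdiag_def by auto
    then show ?thesis using bn_curv[of 1 2 n] curv_ge4[of "pi_ij n (Z n) (etas n) (gam n) 1 2"] by linarith
  qed
  have evs: "eventually (\<lambda>n. bn n ^ 3 * q n < 1 / (55 * E^2)) sequentially"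
    by (rule order_tendstoD(2)[OF lim]) (use Epos in simp)
  have part1: "\<forall>\<^sub>F n in sequentially.
            measure_pmf.prob (adj_pmf n (Z n) (etas n) (gams n))
              {A. \<exists>eta. is_solution n (Z n) A (gam n) eta \<and>
                   eta_dist n eta (etas n)
                     \<le> C * b_n n (Z n) (etas n) (gams n) (eps1 n) (eps2 n) ^ 3
                           * sqrt (ln (real n) / real n)}
            \<ge> 1 - C / real n"
    using evs eventually_ge_at_top[of "4::nat"]
  proof eventually_elim
    case (elim n)
    have n4: "n \<ge> 4" using elim by simp
    have b4: "bn n \<ge> 4" using bn4 n4 by simp
    define T0 where "T0 = 2 * (10 * exp 2 * bn n * (5/4 * sqrt (real n * ln (real n))) + 5/4 * sqrt (real n * ln (real n)))
            * (exp 2 * bn n) / (real n - 1)"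
    have T0b: "T0 \<le> 55 * E^2 * (bn n ^ 3 * q n)"
      using t0_bound[OF n4 b4] unfolding T0_def E_def q_def by (simp add: mult.assoc)
    have "55 * E^2 * (bn n ^ 3 * q n) < 55 * E^2 * (1 / (55 * E^2))"
      using elim Epos by (intro mult_strict_left_mono) auto
    then have small: "T0 < 1" using T0b Epos by simp
    have "ln (real n) \<ge> 0" using n4 by simp
    then have qn: "q n \<ge> 0" unfolding q_def by simp
    have bq: "bn n ^ 3 * q n \<ge> 0" using b4 qn by simp
    define G where "G = {A. (\<forall>i\<in>{1..n}. \<bar>(\<Sum>j\<in>{1..n}-{i}. of_bool (A (i, j))) - (\<Sum>j\<in>{1..n}-{i}. mu (pi_ij n (Z n) (etas n) (gams n) i j))\<bar> < sqrt (real n * ln (real n)))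
       \<and> (\<forall>j\<in>{1..n}. \<bar>(\<Sum>i\<in>{1..n}-{j}. of_bool (A (i, j))) - (\<Sum>i\<in>{1..n}-{j}. mu (pi_ij n (Z n) (etas n) (gams n) i j))\<bar> < sqrt (real n * ln (real n)))}"
    have PG: "measure_pmf.prob (adj_pmf n (Z n) (etas n) (gams n)) G \<ge> 1 - 4 / real n"
      unfolding adj_pmf_def G_def by (rule prob_good) (use n4 mu_01 in auto)
    have sub: "G \<subseteq> {A. \<exists>eta. is_solution n (Z n) A (gam n) eta \<and>
                   eta_dist n eta (etas n)
                     \<le> C * b_n n (Z n) (etas n) (gams n) (eps1 n) (eps2 n) ^ 3
                           * sqrt (ln (real n) / real n)}"
    proof
      fix A assume "A \<in> G"
      then have gr: "\<forall>i\<in>{1..n}. \<bar>(\<Sum>j\<in>{1..n}-{i}. of_bool (A (i, j))) - (\<Sum>j\<in>{1..n}-{i}. mu (pi_ij n (Z n) (etas n) (gams n) i j))\<bar> < sqrt (real n * ln (real n))"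
        and gc: "\<forall>j\<in>{1..n}. \<bar>(\<Sum>i\<in>{1..n}-{j}. of_bool (A (i, j))) - (\<Sum>i\<in>{1..n}-{j}. mu (pi_ij n (Z n) (etas n) (gams n) i j))\<bar> < sqrt (real n * ln (real n))"
        unfolding G_def by auto
      have hz: "eps2 n * (real CARD('p) * z_max n (Z n)) \<le> sqrt (ln (real n) / real n)"
        using a(6) n4 by simp
      obtain eta where eta: "is_solution n (Z n) A (gam n) eta" "eta_dist n eta (etas n) \<le> 2 * T0"
        using exist_n[OF n4 a(7)[rule_format, of n] hz bn_curv small[unfolded T0_def] gr gc] unfolding T0_def by blast
      have "2 * T0 \<le> 110 * E^2 * (bn n ^ 3 * q n)" using T0b by (simp add: algebra_simps)
      also have "\<dots> \<le> C * (bn n ^ 3 * q n)" unfolding C_def using bq by (intro mult_right_mono) auto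
      finally have "eta_dist n eta (etas n) \<le> C * b_n n (Z n) (etas n) (gams n) (eps1 n) (eps2 n) ^ 3 * sqrt (ln (real n) / real n)"
        using eta(2) unfolding bn_def q_def by (simp add: mult.assoc)
      then show "A \<in> {A. \<exists>eta. is_solution n (Z n) A (gam n) eta \<and>
                   eta_dist n eta (etas n)
                     \<le> C * b_n n (Z n) (etas n) (gams n) (eps1 n) (eps2 n) ^ 3
                           * sqrt (ln (real n) / real n)}" using eta(1) by blast
    qed
    have "measure_pmf.prob (adj_pmf n (Z n) (etas n) (gams n)) G \<le> measure_pmf.prob (adj_pmf n (Z n) (etas n) (gams n))
              {A. \<exists>eta. is_solution n (Z n) A (gam n) eta \<and>
                   eta_dist n eta (etas n)
                     \<le> C * b_n n (Z n) (etas n) (gams n) (eps1 n) (eps2 n) ^ 3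
                           * sqrt (ln (real n) / real n)}"
      by (rule measure_pmf.finite_measure_mono[OF sub]) simp
    moreover have "1 - C / real n \<le> 1 - 4 / real n"
      using n4 unfolding C_def by (simp add: divide_right_mono)
    ultimately show ?case using PG by linarith
  qed
  have part3: "\<forall>\<^sub>F n in sequentially. \<forall>A eta eta'.
            is_solution n (Z n) A (gam n) eta \<and> is_solution n (Z n) A (gam n) eta'
            \<longrightarrow> (\<forall>k \<in> {1..2*n-1}. eta k = eta' k)"
    using eventually_ge_at_top[of "3::nat"] by eventually_elim (use uniq in blast)
  show ?thesis using part1 Cpos lim part3 unfolding bn_def q_def by blast
qed


end
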